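(* Let $(V_1, V_2)$ be an irreducible isometric pair on a Hilbert space $\mathcal{H}$. Then $(V_1, V_2)$ is a $1$-finite pair if and only if $(V_1, V_2)$ is unitarily equivalent to $(M_z, M_w)$ on $H^2(\mathbb{D}^2)$.
   Context: All Hilbert spaces are complex and separable. An isometric pair is a pair $(V_1,V_2)$ of commuting isometries. An isometry $V$ is a shift if $V^{*m}\to0$ strongly. A BCL pair is an isometric pair with $V_1V_2$ a shift. $[V_2^*,V_1] := V_2^*V_1 - V_1V_2^*$. A compact normal pair is a BCL pair with $[V_2^*,V_1]$ compact and normal. $C(V_1,V_2) := I - V_1V_1^* - V_2V_2^* + V_1V_2V_1^*V_2^*$. A $1$-finite pair is a compact normal pair with $\operatorname{rank} C(V_1,V_2)=1$. Irreducible: no closed subspace other than $\{0\}$ and $\mathcal{H}$ invariant under $V_1,V_2,V_1^*,V_2^*$. $H^2(\mathbb{D}^2)$ is the Hardy space of the bidisc and $M_z,M_w$ are multiplication by the coordinate functions. Unitary equivalence of pairs means a single unitary intertwining both components. *)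

theory Defs
  imports "HOL-Analysis.Analysis"
begin

class complex_inner = real_normed_vector +
  fixes scaleC :: "complex \<Rightarrow> 'a \<Rightarrow> 'a" (infixr \<open>*\<^sub>C\<close> 75)
    and cinner :: "'a \<Rightarrow> 'a \<Rightarrow> complex"
  assumes scaleC_add_right: "a *\<^sub>C (x + y) = a *\<^sub>C x + a *\<^sub>C y"
    and scaleC_add_left: "(a + b) *\<^sub>C x = a *\<^sub>C x + b *\<^sub>C x"
    and scaleC_scaleC: "a *\<^sub>C (b *\<^sub>C x) = (a * b) *\<^sub>C x"
    and scaleC_one: "1 *\<^sub>C x = x"
    and scaleR_scaleC: "r *\<^sub>R x = (complex_of_real r) *\<^sub>C x"
    and cinner_add_left: "cinner (x + y) z = cinner x z + cinner y z"
    and cinner_scaleC_left: "cinner (a *\<^sub>C x) y = a * cinner x y"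
    and cinner_commute: "cinner y x = cnj (cinner x y)"
    and cinner_self_nonneg: "0 \<le> Re (cinner x x)"
    and cinner_self_eq_zero: "cinner x x = 0 \<longleftrightarrow> x = 0"
    and norm_eq_sqrt_cinner: "norm x = sqrt (Re (cinner x x))"

class chilbert = complex_inner + complete_space

instantiation complex :: chilbert
begin
definition scaleC_complex :: "complex \<Rightarrow> complex \<Rightarrow> complex" where "scaleC_complex a x = a * x"
definition cinner_complex :: "complex \<Rightarrow> complex \<Rightarrow> complex" where "cinner_complex x y = x * cnj y"
instance
proof
  fix x :: complex
  show "cinner x x = 0 \<longleftrightarrow> x = 0"
    by (simp add: cinner_complex_def)
qed (auto simp: scaleC_complex_def cinner_complex_def algebra_simps scaleR_conv_of_real
                    complex_norm_square[symmetric] cmod_def)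
end

definition separable_space :: "'a::topological_space itself \<Rightarrow> bool" where
  "separable_space _ \<longleftrightarrow> (\<exists>D::'a set. countable D \<and> closure D = UNIV)"

definition clinear :: "('a::chilbert \<Rightarrow> 'b::chilbert) \<Rightarrow> bool" where
  "clinear T \<longleftrightarrow> (\<forall>x y. T (x + y) = T x + T y) \<and> (\<forall>a x. T (a *\<^sub>C x) = a *\<^sub>C T x)"

definition cbounded_linear :: "('a::chilbert \<Rightarrow> 'b::chilbert) \<Rightarrow> bool" where
  "cbounded_linear T \<longleftrightarrow> clinear T \<and> (\<exists>K. \<forall>x. norm (T x) \<le> norm x * K)"

text \<open>The Hilbert space adjoint (unique for bounded operators, by Riesz).\<close>
definition adj :: "('a::chilbert \<Rightarrow> 'a) \<Rightarrow> ('a \<Rightarrow> 'a)" where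
  "adj T = (THE S. \<forall>x y. cinner (T x) y = cinner x (S y))"

definition isometry :: "('a::chilbert \<Rightarrow> 'a) \<Rightarrow> bool" where
  "isometry V \<longleftrightarrow> cbounded_linear V \<and> (\<forall>x. norm (V x) = norm x)"

definition is_shift :: "('a::chilbert \<Rightarrow> 'a) \<Rightarrow> bool" where
  "is_shift V \<longleftrightarrow> isometry V \<and> (\<forall>x. (\<lambda>m. (adj V ^^ m) x) \<longlonglongrightarrow> 0)"

definition compact_op :: "('a::chilbert \<Rightarrow> 'a) \<Rightarrow> bool" where
  "compact_op T \<longleftrightarrow> cbounded_linear T \<and> compact (closure (T ` {x. norm x \<le> 1}))"

definition normal_op :: "('a::chilbert \<Rightarrow> 'a) \<Rightarrow> bool" where
  "normal_op T \<longleftrightarrow> T \<circ> adj T = adj T \<circ> T"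

text \<open>Rank = complex dimension of the range (0 if infinite-dimensional, as for
  \<open>Vector_Spaces.dim\<close>; only rank 1 is used).\<close>
definition crank :: "('a::chilbert \<Rightarrow> 'a) \<Rightarrow> nat" where
  "crank T = vector_space.dim (scaleC :: complex \<Rightarrow> 'a \<Rightarrow> 'a) (range T)"

definition isometric_pair :: "('a::chilbert \<Rightarrow> 'a) \<Rightarrow> ('a \<Rightarrow> 'a) \<Rightarrow> bool" where
  "isometric_pair V1 V2 \<longleftrightarrow> isometry V1 \<and> isometry V2 \<and> V1 \<circ> V2 = V2 \<circ> V1"

definition BCL_pair :: "('a::chilbert \<Rightarrow> 'a) \<Rightarrow> ('a \<Rightarrow> 'a) \<Rightarrow> bool" where
  "BCL_pair V1 V2 \<longleftrightarrow> isometric_pair V1 V2 \<and> is_shift (V1 \<circ> V2)"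

definition cross_comm :: "('a::chilbert \<Rightarrow> 'a) \<Rightarrow> ('a \<Rightarrow> 'a) \<Rightarrow> ('a \<Rightarrow> 'a)" where
  "cross_comm V1 V2 = (\<lambda>x. adj V2 (V1 x) - V1 (adj V2 x))"

definition compact_normal_pair :: "('a::chilbert \<Rightarrow> 'a) \<Rightarrow> ('a \<Rightarrow> 'a) \<Rightarrow> bool" where
  "compact_normal_pair V1 V2 \<longleftrightarrow> BCL_pair V1 V2 \<and>
     compact_op (cross_comm V1 V2) \<and> normal_op (cross_comm V1 V2)"

definition defect_op :: "('a::chilbert \<Rightarrow> 'a) \<Rightarrow> ('a \<Rightarrow> 'a) \<Rightarrow> ('a \<Rightarrow> 'a)" where
  "defect_op V1 V2 = (\<lambda>x. x - V1 (adj V1 x) - V2 (adj V2 x) + V1 (V2 (adj V1 (adj V2 x))))"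

definition one_finite_pair :: "('a::chilbert \<Rightarrow> 'a) \<Rightarrow> ('a \<Rightarrow> 'a) \<Rightarrow> bool" where
  "one_finite_pair V1 V2 \<longleftrightarrow> compact_normal_pair V1 V2 \<and> crank (defect_op V1 V2) = 1"

definition closed_csubspace :: "'a::chilbert set \<Rightarrow> bool" where
  "closed_csubspace M \<longleftrightarrow> closed M \<and> 0 \<in> M \<and> (\<forall>x\<in>M. \<forall>y\<in>M. x + y \<in> M) \<and>
     (\<forall>a. \<forall>x\<in>M. a *\<^sub>C x \<in> M)"

definition irreducible_pair :: "('a::chilbert \<Rightarrow> 'a) \<Rightarrow> ('a \<Rightarrow> 'a) \<Rightarrow> bool" where
  "irreducible_pair V1 V2 \<longleftrightarrow> (\<forall>M. closed_csubspace M \<and>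
      V1 ` M \<subseteq> M \<and> V2 ` M \<subseteq> M \<and> adj V1 ` M \<subseteq> M \<and> adj V2 ` M \<subseteq> M
      \<longrightarrow> M = {0} \<or> M = UNIV)"

definition bidisc :: "(complex \<times> complex) set" where
  "bidisc = {(z, w). norm z < 1 \<and> norm w < 1}"

definition sq_summable_coeffs :: "(nat \<times> nat \<Rightarrow> complex) \<Rightarrow> bool" where
  "sq_summable_coeffs c \<longleftrightarrow> (\<lambda>k. (norm (c k))\<^sup>2) summable_on UNIV"

definition H2_fun :: "(nat \<times> nat \<Rightarrow> complex) \<Rightarrow> (complex \<times> complex \<Rightarrow> complex)" where
  "H2_fun c = (\<lambda>(z, w). if (z, w) \<in> bidisc then (\<Sum>\<^sub>\<infinity>(m, n). c (m, n) * z ^ m * w ^ n) else 0)"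

definition H2 :: "(complex \<times> complex \<Rightarrow> complex) set" where
  "H2 = H2_fun ` {c. sq_summable_coeffs c}"

definition H2_coeff :: "(complex \<times> complex \<Rightarrow> complex) \<Rightarrow> (nat \<times> nat \<Rightarrow> complex)" where
  "H2_coeff f = (THE c. sq_summable_coeffs c \<and> H2_fun c = f)"

definition H2_norm :: "(complex \<times> complex \<Rightarrow> complex) \<Rightarrow> real" where
  "H2_norm f = sqrt (\<Sum>\<^sub>\<infinity>k. (norm (H2_coeff f k))\<^sup>2)"

definition Mz :: "(complex \<times> complex \<Rightarrow> complex) \<Rightarrow> (complex \<times> complex \<Rightarrow> complex)" where
  "Mz f = (\<lambda>(z, w). z * f (z, w))"

definition Mw :: "(complex \<times> complex \<Rightarrow> complex) \<Rightarrow> (complex \<times> complex \<Rightarrow> complex)" where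
  "Mw f = (\<lambda>(z, w). w * f (z, w))"

definition unitary_to_H2 :: "('a::chilbert \<Rightarrow> (complex \<times> complex \<Rightarrow> complex)) \<Rightarrow> bool" where
  "unitary_to_H2 U \<longleftrightarrow> bij_betw U UNIV H2 \<and>
     (\<forall>x y. U (x + y) = (\<lambda>p. U x p + U y p)) \<and>
     (\<forall>a x. U (a *\<^sub>C x) = (\<lambda>p. a * U x p)) \<and>
     (\<forall>x. H2_norm (U x) = norm x)"

definition unitarily_equiv_Mz_Mw :: "('a::chilbert \<Rightarrow> 'a) \<Rightarrow> ('a \<Rightarrow> 'a) \<Rightarrow> bool" where
  "unitarily_equiv_Mz_Mw V1 V2 \<longleftrightarrow> (\<exists>U. unitary_to_H2 U \<and>
     (\<forall>x. U (V1 x) = Mz (U x)) \<and> (\<forall>x. U (V2 x) = Mw (U x)))"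

end

theory Submission
  imports Defs "HOL-Complex_Analysis.Cauchy_Integral_Formula"
begin

lemma geo_summable: "0 \<le> a \<Longrightarrow> a < (1::real) \<Longrightarrow> (\<lambda>n::nat. a ^ n) summable_on UNIV"
  by (rule summable_nonneg_imp_summable_on) (auto intro: summable_geometric)

lemma geo_partial: "0 \<le> a \<Longrightarrow> a < (1::real) \<Longrightarrow> (\<Sum>n\<in>F. a ^ n) \<le> 1 / (1 - a)" if fin: "finite F"
proof -
  assume a: "0 \<le> a" "a < 1"
  have "(\<Sum>n\<in>F. a ^ n) \<le> (\<Sum>n. a ^ n)"
  proof -
    obtain N where "F \<subseteq> {..<N}" using finite_nat_bounded[OF fin] by blast
    then have "(\<Sum>n\<in>F. a ^ n) \<le> (\<Sum>n<N. a ^ n)" using a by (intro sum_mono2) auto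
    also have "\<dots> \<le> (\<Sum>n. a ^ n)" using a by (intro sum_le_suminf summable_geometric) auto
    finally show ?thesis .
  qed
  also have "\<dots> = 1 / (1 - a)" using a by (intro suminf_geometric) auto
  finally show ?thesis .
qed

lemma geo2_summable:
  assumes a: "0 \<le> a" "a < (1::real)" and b: "0 \<le> b" "b < (1::real)"
  shows "(\<lambda>(m::nat, n::nat). a ^ m * b ^ n) summable_on UNIV"
proof (rule nonneg_bdd_above_summable_on)
  show "0 \<le> (case x of (m, n) \<Rightarrow> a ^ m * b ^ n)" for x using a b by (auto split: prod.splits)
  show "bdd_above (sum (\<lambda>(m, n). a ^ m * b ^ n) ` {F. F \<subseteq> UNIV \<and> finite F})"
  proof (rule bdd_aboveI2)
    fix F :: "(nat \<times> nat) set" assume "F \<in> {F. F \<subseteq> UNIV \<and> finite F}"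
    then have F: "finite F" by simp
    define F1 where "F1 = fst ` F"
    define F2 where "F2 = snd ` F"
    have sub: "F \<subseteq> F1 \<times> F2" unfolding F1_def F2_def by (force intro: rev_image_eqI)
    have "(\<Sum>k\<in>F. case k of (m, n) \<Rightarrow> a ^ m * b ^ n) \<le> (\<Sum>k\<in>F1 \<times> F2. case k of (m, n) \<Rightarrow> a ^ m * b ^ n)"
      using F a b sub unfolding F1_def F2_def by (intro sum_mono2) (auto split: prod.splits)
    also have "\<dots> = (\<Sum>m\<in>F1. a ^ m) * (\<Sum>n\<in>F2. b ^ n)"
      by (simp add: sum_product sum.cartesian_product)
    also have "\<dots> \<le> (1 / (1 - a)) * (1 / (1 - b))"
      using F a b unfolding F1_def F2_def
      by (intro mult_mono geo_partial sum_nonneg) auto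
    finally show "(\<Sum>k\<in>F. case k of (m, n) \<Rightarrow> a ^ m * b ^ n) \<le> (1 / (1 - a)) * (1 / (1 - b))" .
  qed
qed

lemma sq_summable_bound:
  assumes "sq_summable_coeffs c"
  shows "cmod (c k) \<le> sqrt (\<Sum>\<^sub>\<infinity>j. (cmod (c j))\<^sup>2)"
proof -
  have "(cmod (c k))\<^sup>2 = (\<Sum>j\<in>{k}. (cmod (c j))\<^sup>2)" by simp
  also have "\<dots> \<le> (\<Sum>\<^sub>\<infinity>j. (cmod (c j))\<^sup>2)"
    using assms unfolding sq_summable_coeffs_def by (intro finite_sum_le_infsum) auto
  finally show ?thesis by (simp add: real_le_rsqrt)
qed

lemma bounded_coeff_summable:
  fixes c :: "nat \<times> nat \<Rightarrow> complex"
  assumes B: "\<And>k. cmod (c k) \<le> B" and z: "cmod z < 1" and w: "cmod w < 1"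
  shows "(\<lambda>(m, n). c (m, n) * z ^ m * w ^ n) summable_on UNIV"
proof -
  have B0: "0 \<le> B" using B[of "(0,0)"] norm_ge_zero order.trans by blast
  have g: "(\<lambda>(m, n). B * (cmod z ^ m * cmod w ^ n)) summable_on UNIV"
    using summable_on_cmult_right[OF geo2_summable[of "cmod z" "cmod w"]] z w
    by (simp add: case_prod_unfold)
  have "(\<lambda>k. norm ((\<lambda>(m, n). c (m, n) * z ^ m * w ^ n) k)) summable_on UNIV"
  proof (rule summable_on_comparison_test[OF g])
    show "0 \<le> norm ((\<lambda>(m, n). c (m, n) * z ^ m * w ^ n) k)" for k by simp
    fix k :: "nat \<times> nat"
    obtain m n where k: "k = (m, n)" by (cases k)
    have "cmod (c (m, n) * z ^ m * w ^ n) = cmod (c (m,n)) * (cmod z ^ m * cmod w ^ n)"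
      by (simp add: norm_mult norm_power)
    also have "\<dots> \<le> B * (cmod z ^ m * cmod w ^ n)"
      using B by (intro mult_right_mono) auto
    finally show "norm ((\<lambda>(m, n). c (m, n) * z ^ m * w ^ n) k) \<le> (\<lambda>(m, n). B * (cmod z ^ m * cmod w ^ n)) k"
      by (simp add: k)
  qed
  then show ?thesis by (rule abs_summable_summable)
qed

lemma bidisc_iff: "(z, w) \<in> bidisc \<longleftrightarrow> cmod z < 1 \<and> cmod w < 1"
  by (simp add: bidisc_def)

lemma H2_term_summable:
  assumes "sq_summable_coeffs c" "(z, w) \<in> bidisc"
  shows "(\<lambda>(m, n). c (m, n) * z ^ m * w ^ n) summable_on UNIV"
proof -
  have B: "\<And>k. cmod (c k) \<le> sqrt (\<Sum>\<^sub>\<infinity>j. (cmod (c j))\<^sup>2)"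
    using sq_summable_bound[OF assms(1)] by blast
  show ?thesis using bounded_coeff_summable[of c "sqrt (\<Sum>\<^sub>\<infinity>j. (cmod (c j))\<^sup>2)" z w] B assms(2)
    by (simp add: bidisc_iff)
qed

lemma H2_fun_in: "(z, w) \<in> bidisc \<Longrightarrow> H2_fun c (z, w) = (\<Sum>\<^sub>\<infinity>(m, n). c (m, n) * z ^ m * w ^ n)"
  by (simp add: H2_fun_def)

lemma H2_fun_out: "(z, w) \<notin> bidisc \<Longrightarrow> H2_fun c (z, w) = 0"
  by (simp add: H2_fun_def)

lemma powser_unique0:
  fixes a :: "nat \<Rightarrow> complex"
  assumes sm: "\<And>z. cmod z < 1 \<Longrightarrow> (\<lambda>n. a n * z ^ n) sums 0"
  shows "a k = 0"
proof (cases "k = 0")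
  case True
  have "(\<lambda>n. a n * 0 ^ n) sums 0" using sm[of 0] by simp
  then show ?thesis using True by simp
next
  case False
  show ?thesis
  proof (rule ccontr)
    assume ak: "a k \<noteq> 0"
    show False
    proof (rule powser_0_nonzero[of 1 0 a "\<lambda>_. 0" k])
      show "(0::real) < 1" by simp
      show "(\<lambda>n. a n * (x - 0) ^ n) sums 0" if "norm (x - 0) < 1" for x using sm that by simp
      show "(\<lambda>_. 0::complex) 0 = 0" by simp
      show "a k \<noteq> 0" by (rule ak)
      show "0 < k" using False by simp
      fix s :: real assume s: "0 < s" and nz: "\<And>z::complex. z \<in> cball 0 s - {0} \<Longrightarrow> (\<lambda>_. 0::complex) z \<noteq> 0"
      have "complex_of_real s \<in> cball 0 s - {0}" using s by simp
      from nz[OF this] show False by simp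
    qed
  qed
qed

lemma row_summable:
  fixes c :: "nat \<times> nat \<Rightarrow> complex"
  assumes B: "\<And>k. cmod (c k) \<le> B" and w: "cmod w < 1"
  shows "(\<lambda>n. c (m, n) * w ^ n) summable_on UNIV"
proof -
  have g: "(\<lambda>n. B * cmod w ^ n) summable_on UNIV"
    using summable_on_cmult_right[OF geo_summable[of "cmod w"]] w by simp
  have "(\<lambda>n. norm (c (m, n) * w ^ n)) summable_on UNIV"
  proof (rule summable_on_comparison_test[OF g])
    show "0 \<le> norm (c (m, n) * w ^ n)" for n by simp
    show "norm (c (m, n) * w ^ n) \<le> B * cmod w ^ n" for n
      using B[of "(m,n)"] by (simp add: norm_mult norm_power mult_right_mono)
  qed
  then show ?thesis by (rule abs_summable_summable)
qed

lemma H2_identity: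
  assumes sq: "sq_summable_coeffs c" and z: "\<And>p. H2_fun c p = 0"
  shows "c k = 0"
proof -
  obtain m n where k: "k = (m, n)" by (cases k)
  define B where "B = sqrt (\<Sum>\<^sub>\<infinity>j. (cmod (c j))\<^sup>2)"
  have B: "\<And>k. cmod (c k) \<le> B" unfolding B_def by (rule sq_summable_bound[OF sq])
  define g where "g w m = (\<Sum>\<^sub>\<infinity>n. c (m, n) * w ^ n)" for w m
  have g0: "g w m = 0" if w: "cmod w < 1" for w m
  proof (rule powser_unique0)
    fix z :: complex assume zz: "cmod z < 1"
    define F where "F = (\<lambda>(m, n). c (m, n) * z ^ m * w ^ n)"
    have "(z, w) \<in> bidisc" using zz w by (simp add: bidisc_iff)
    then have Fs: "F summable_on UNIV" and F0: "infsum F UNIV = 0"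
      using H2_term_summable[OF sq] z[of "(z, w)"] H2_fun_in[of z w c] unfolding F_def by auto
    have s1: "(F has_sum 0) (Sigma UNIV (\<lambda>_. UNIV))" using Fs F0 has_sum_infsum by fastforce
    have s2: "((\<lambda>n. F (m, n)) has_sum (z ^ m * g w m)) UNIV" for m
    proof -
      have "((\<lambda>n. c (m, n) * w ^ n) has_sum g w m) UNIV"
        unfolding g_def using row_summable[of c B, OF B w] by (simp add: has_sum_infsum)
      then have "((\<lambda>n. z ^ m * (c (m, n) * w ^ n)) has_sum (z ^ m * g w m)) UNIV"
        by (rule has_sum_cmult_right)
      then show ?thesis unfolding F_def by (simp add: algebra_simps)
    qed
    have "((\<lambda>m. z ^ m * g w m) has_sum 0) UNIV"
      by (rule has_sum_SigmaD[where f=F and A=UNIV and B="\<lambda>_. UNIV", OF s1 s2])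
    then have "(\<lambda>m. z ^ m * g w m) sums 0" by (rule has_sum_imp_sums)
    then show "(\<lambda>m. g w m * z ^ m) sums 0" by (simp add: mult.commute)
  qed
  have "c (m, n) = 0"
  proof (rule powser_unique0[where a="\<lambda>n. c (m, n)"])
    fix w :: complex assume w: "cmod w < 1"
    have "((\<lambda>n. c (m, n) * w ^ n) has_sum g w m) UNIV"
      unfolding g_def using row_summable[of c B, OF B w] by (simp add: has_sum_infsum)
    then show "(\<lambda>n. c (m, n) * w ^ n) sums 0" using g0[OF w] by (simp add: has_sum_imp_sums)
  qed
  then show ?thesis using k by simp
qed

lemma sq_add_bound: "(cmod (a + b))\<^sup>2 \<le> 2 * (cmod a)\<^sup>2 + 2 * (cmod b)\<^sup>2"
proof -
  have "(cmod (a + b))\<^sup>2 \<le> (cmod a + cmod b)\<^sup>2"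
    by (intro power_mono norm_triangle_ineq) simp
  also have "\<dots> \<le> 2 * (cmod a)\<^sup>2 + 2 * (cmod b)\<^sup>2"
    using sum_squares_bound[of "cmod a" "cmod b"] by (simp add: power2_eq_square algebra_simps)
  finally show ?thesis .
qed

lemma sq_summable_add: "sq_summable_coeffs c \<Longrightarrow> sq_summable_coeffs d \<Longrightarrow> sq_summable_coeffs (\<lambda>k. c k + d k)"
  unfolding sq_summable_coeffs_def
proof -
  assume c: "(\<lambda>k. (cmod (c k))\<^sup>2) summable_on UNIV" and d: "(\<lambda>k. (cmod (d k))\<^sup>2) summable_on UNIV"
  have s: "(\<lambda>k. 2 * (cmod (c k))\<^sup>2 + 2 * (cmod (d k))\<^sup>2) summable_on UNIV"
    by (intro summable_on_add summable_on_cmult_right c d)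
  show "(\<lambda>k. (cmod (c k + d k))\<^sup>2) summable_on UNIV"
    by (rule summable_on_comparison_test[OF s]) (auto intro: sq_add_bound)
qed

lemma sq_summable_scale: "sq_summable_coeffs c \<Longrightarrow> sq_summable_coeffs (\<lambda>k. a * c k)"
  unfolding sq_summable_coeffs_def
  by (simp add: norm_mult power_mult_distrib summable_on_cmult_right)

lemma H2_fun_add:
  assumes c: "sq_summable_coeffs c" and d: "sq_summable_coeffs d"
  shows "H2_fun (\<lambda>k. c k + d k) = (\<lambda>p. H2_fun c p + H2_fun d p)"
proof
  fix p :: "complex \<times> complex"
  obtain z w where p: "p = (z, w)" by (cases p)
  show "H2_fun (\<lambda>k. c k + d k) p = H2_fun c p + H2_fun d p"
  proof (cases "(z, w) \<in> bidisc")
    case True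
    have "(\<Sum>\<^sub>\<infinity>(m, n). (c (m, n) + d (m, n)) * z ^ m * w ^ n)
        = (\<Sum>\<^sub>\<infinity>k. (\<lambda>(m, n). c (m, n) * z ^ m * w ^ n) k + (\<lambda>(m, n). d (m, n) * z ^ m * w ^ n) k)"
      by (rule infsum_cong) (auto simp: algebra_simps)
    also have "\<dots> = (\<Sum>\<^sub>\<infinity>(m, n). c (m, n) * z ^ m * w ^ n) + (\<Sum>\<^sub>\<infinity>(m, n). d (m, n) * z ^ m * w ^ n)"
      by (rule infsum_add[OF H2_term_summable[OF c True] H2_term_summable[OF d True]])
    finally show ?thesis using True p by (simp add: H2_fun_in)
  next
    case False
    then show ?thesis using p by (simp add: H2_fun_out)
  qed
qed

lemma H2_fun_scale: "H2_fun (\<lambda>k. a * c k) = (\<lambda>p. a * H2_fun c p)"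
proof
  fix p :: "complex \<times> complex"
  obtain z w where p: "p = (z, w)" by (cases p)
  show "H2_fun (\<lambda>k. a * c k) p = a * H2_fun c p"
  proof (cases "(z, w) \<in> bidisc")
    case True
    have "(\<Sum>\<^sub>\<infinity>(m, n). a * c (m, n) * z ^ m * w ^ n) = (\<Sum>\<^sub>\<infinity>k. a * (\<lambda>(m, n). c (m, n) * z ^ m * w ^ n) k)"
      by (rule infsum_cong) (auto simp: algebra_simps)
    also have "\<dots> = a * (\<Sum>\<^sub>\<infinity>(m, n). c (m, n) * z ^ m * w ^ n)"
      by (rule infsum_cmult_right')
    finally show ?thesis using True p by (simp add: H2_fun_in)
  next
    case False
    then show ?thesis using p by (simp add: H2_fun_out)
  qed
qed

lemma H2_fun_inj:
  assumes c: "sq_summable_coeffs c" and d: "sq_summable_coeffs d" and eq: "H2_fun c = H2_fun d"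
  shows "c = d"
proof -
  have md: "sq_summable_coeffs (\<lambda>k. (-1) * d k)" by (rule sq_summable_scale[OF d])
  have "H2_fun (\<lambda>k. c k + (-1) * d k) = (\<lambda>p. H2_fun c p + (-1) * H2_fun d p)"
    using H2_fun_add[OF c md] H2_fun_scale[of "-1" d] by simp
  then have "\<And>p. H2_fun (\<lambda>k. c k + (-1) * d k) p = 0" using eq by simp
  then have "\<And>k. c k + (-1) * d k = 0" using H2_identity[OF sq_summable_add[OF c md]] by blast
  then show ?thesis by (auto simp: fun_eq_iff)
qed

lemma H2_coeff_fun: "sq_summable_coeffs c \<Longrightarrow> H2_coeff (H2_fun c) = c"
  unfolding H2_coeff_def
  by (rule the_equality) (auto intro: H2_fun_inj)

lemma H2_memD: "f \<in> H2 \<Longrightarrow> sq_summable_coeffs (H2_coeff f) \<and> H2_fun (H2_coeff f) = f"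
  unfolding H2_def using H2_coeff_fun by auto

lemma H2_fun_mem: "sq_summable_coeffs c \<Longrightarrow> H2_fun c \<in> H2"
  unfolding H2_def by blast

lemma H2_norm_fun: "sq_summable_coeffs c \<Longrightarrow> H2_norm (H2_fun c) = sqrt (\<Sum>\<^sub>\<infinity>k. (cmod (c k))\<^sup>2)"
  unfolding H2_norm_def by (simp add: H2_coeff_fun)

definition shz :: "(nat \<times> nat \<Rightarrow> complex) \<Rightarrow> nat \<times> nat \<Rightarrow> complex" where
  "shz c = (\<lambda>(m, n). if m = 0 then 0 else c (m - 1, n))"

definition shw :: "(nat \<times> nat \<Rightarrow> complex) \<Rightarrow> nat \<times> nat \<Rightarrow> complex" where
  "shw c = (\<lambda>(m, n). if n = 0 then 0 else c (m, n - 1))"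

definition hz :: "nat \<times> nat \<Rightarrow> nat \<times> nat" where "hz = (\<lambda>(m, n). (Suc m, n))"
definition hw :: "nat \<times> nat \<Rightarrow> nat \<times> nat" where "hw = (\<lambda>(m, n). (m, Suc n))"

lemma inj_hz: "inj hz" unfolding hz_def inj_def by auto
lemma inj_hw: "inj hw" unfolding hw_def inj_def by auto

lemma range_hz: "k \<notin> range hz \<Longrightarrow> fst k = 0"
  unfolding hz_def by (cases k) (auto simp: image_iff, metis not0_implies_Suc)
lemma range_hw: "k \<notin> range hw \<Longrightarrow> snd k = 0"
  unfolding hw_def by (cases k) (auto simp: image_iff, metis not0_implies_Suc)

lemma sq_summable_shz: "sq_summable_coeffs c \<Longrightarrow> sq_summable_coeffs (shz c)"
  unfolding sq_summable_coeffs_def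
proof -
  assume c: "(\<lambda>k. (cmod (c k))\<^sup>2) summable_on UNIV"
  have "((\<lambda>k. (cmod (shz c k))\<^sup>2) \<circ> hz) summable_on UNIV"
    using c by (simp add: comp_def hz_def shz_def case_prod_unfold)
  then have "(\<lambda>k. (cmod (shz c k))\<^sup>2) summable_on range hz"
    by (simp add: summable_on_reindex[OF inj_hz])
  moreover have "(\<lambda>k. (cmod (shz c k))\<^sup>2) summable_on range hz \<longleftrightarrow> (\<lambda>k. (cmod (shz c k))\<^sup>2) summable_on UNIV"
    by (rule summable_on_cong_neutral) (auto dest!: range_hz simp: shz_def split: prod.splits)
  ultimately show "(\<lambda>k. (cmod (shz c k))\<^sup>2) summable_on UNIV" by simp
qed

lemma sq_summable_shw: "sq_summable_coeffs c \<Longrightarrow> sq_summable_coeffs (shw c)"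
  unfolding sq_summable_coeffs_def
proof -
  assume c: "(\<lambda>k. (cmod (c k))\<^sup>2) summable_on UNIV"
  have "((\<lambda>k. (cmod (shw c k))\<^sup>2) \<circ> hw) summable_on UNIV"
    using c by (simp add: comp_def hw_def shw_def case_prod_unfold)
  then have "(\<lambda>k. (cmod (shw c k))\<^sup>2) summable_on range hw"
    by (simp add: summable_on_reindex[OF inj_hw])
  moreover have "(\<lambda>k. (cmod (shw c k))\<^sup>2) summable_on range hw \<longleftrightarrow> (\<lambda>k. (cmod (shw c k))\<^sup>2) summable_on UNIV"
    by (rule summable_on_cong_neutral) (auto dest!: range_hw simp: shw_def split: prod.splits)
  ultimately show "(\<lambda>k. (cmod (shw c k))\<^sup>2) summable_on UNIV" by simp
qed

lemma H2_fun_shz: "H2_fun (shz c) = Mz (H2_fun c)"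
proof
  fix p :: "complex \<times> complex"
  obtain z w where p: "p = (z, w)" by (cases p)
  show "H2_fun (shz c) p = Mz (H2_fun c) p"
  proof (cases "(z, w) \<in> bidisc")
    case True
    define G where "G = (\<lambda>(m, n). shz c (m, n) * z ^ m * w ^ n)"
    have "infsum G UNIV = infsum G (range hz)"
      by (rule infsum_cong_neutral) (auto dest!: range_hz simp: G_def shz_def split: prod.splits)
    also have "\<dots> = infsum (G \<circ> hz) UNIV" by (rule infsum_reindex[OF inj_hz])
    also have "\<dots> = (\<Sum>\<^sub>\<infinity>k. z * (\<lambda>(m, n). c (m, n) * z ^ m * w ^ n) k)"
      by (rule infsum_cong) (auto simp: G_def hz_def shz_def algebra_simps)
    also have "\<dots> = z * (\<Sum>\<^sub>\<infinity>(m, n). c (m, n) * z ^ m * w ^ n)" by (rule infsum_cmult_right')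
    finally show ?thesis using True p by (simp add: H2_fun_in Mz_def G_def)
  next
    case False
    then show ?thesis using p by (simp add: H2_fun_out Mz_def)
  qed
qed

lemma H2_fun_shw: "H2_fun (shw c) = Mw (H2_fun c)"
proof
  fix p :: "complex \<times> complex"
  obtain z w where p: "p = (z, w)" by (cases p)
  show "H2_fun (shw c) p = Mw (H2_fun c) p"
  proof (cases "(z, w) \<in> bidisc")
    case True
    define G where "G = (\<lambda>(m, n). shw c (m, n) * z ^ m * w ^ n)"
    have "infsum G UNIV = infsum G (range hw)"
      by (rule infsum_cong_neutral) (auto dest!: range_hw simp: G_def shw_def split: prod.splits)
    also have "\<dots> = infsum (G \<circ> hw) UNIV" by (rule infsum_reindex[OF inj_hw])
    also have "\<dots> = (\<Sum>\<^sub>\<infinity>k. w * (\<lambda>(m, n). c (m, n) * z ^ m * w ^ n) k)"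
      by (rule infsum_cong) (auto simp: G_def hw_def shw_def algebra_simps)
    also have "\<dots> = w * (\<Sum>\<^sub>\<infinity>(m, n). c (m, n) * z ^ m * w ^ n)" by (rule infsum_cmult_right')
    finally show ?thesis using True p by (simp add: H2_fun_in Mw_def G_def)
  next
    case False
    then show ?thesis using p by (simp add: H2_fun_out Mw_def)
  qed
qed

lemma cinner_add_right: "cinner x (y + z) = cinner x y + cinner (x::'a::complex_inner) z"
proof -
  have "cinner x (y + z) = cnj (cinner (y + z) x)" by (rule cinner_commute)
  also have "\<dots> = cnj (cinner y x) + cnj (cinner z x)" by (simp only: cinner_add_left complex_cnj_add)
  also have "\<dots> = cinner x y + cinner x z" by (simp only: cinner_commute[of x y] cinner_commute[of x z])
  finally show ?thesis .
qed

lemma cinner_scaleC_right: "cinner x (a *\<^sub>C y) = cnj a * cinner (x::'a::complex_inner) y"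
proof -
  have "cinner x (a *\<^sub>C y) = cnj (cinner (a *\<^sub>C y) x)" by (rule cinner_commute)
  also have "\<dots> = cnj a * cnj (cinner y x)" by (simp only: cinner_scaleC_left complex_cnj_mult)
  also have "\<dots> = cnj a * cinner x y" by (simp only: cinner_commute[of x y])
  finally show ?thesis .
qed

lemma cinner_zero_left[simp]: "cinner 0 (x::'a::complex_inner) = 0"
proof -
  have "cinner (0 + 0) x = cinner 0 x + cinner 0 x" by (rule cinner_add_left)
  then show ?thesis by simp
qed

lemma cinner_zero_right[simp]: "cinner x (0::'a::complex_inner) = 0"
proof -
  have "cinner x (0 + 0) = cinner x 0 + cinner x 0" by (rule cinner_add_right)
  then show ?thesis by simp
qed

lemma scaleC_minus1: "(-1) *\<^sub>C (x::'a::complex_inner) = - x"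
proof -
  have "(-1::real) *\<^sub>R x = complex_of_real (-1) *\<^sub>C x" by (rule scaleR_scaleC)
  then show ?thesis by simp
qed

lemma cinner_minus_left: "cinner (- x) (y::'a::complex_inner) = - cinner x y"
proof -
  have "cinner ((-1) *\<^sub>C x) y = (-1) * cinner x y" by (rule cinner_scaleC_left)
  then show ?thesis by (simp only: scaleC_minus1) simp
qed

lemma cinner_minus_right: "cinner x (- y::'a::complex_inner) = - cinner x y"
proof -
  have "cinner x ((-1) *\<^sub>C y) = cnj (-1) * cinner x y" by (rule cinner_scaleC_right)
  then show ?thesis by (simp only: scaleC_minus1) simp
qed

lemma cinner_diff_left: "cinner (x - y) (z::'a::complex_inner) = cinner x z - cinner y z"
  by (simp only: diff_conv_add_uminus cinner_add_left cinner_minus_left)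

lemma cinner_diff_right: "cinner x (y - z::'a::complex_inner) = cinner x y - cinner x z"
  by (simp only: diff_conv_add_uminus cinner_add_right cinner_minus_right)

lemma scaleC_zero_right[simp]: "a *\<^sub>C (0::'a::complex_inner) = 0"
proof -
  have "a *\<^sub>C (0 + 0::'a) = a *\<^sub>C 0 + a *\<^sub>C 0" by (rule scaleC_add_right)
  then show ?thesis by simp
qed

lemma scaleC_zero_left[simp]: "0 *\<^sub>C (x::'a::complex_inner) = 0"
proof -
  have "(0 + 0) *\<^sub>C x = 0 *\<^sub>C x + 0 *\<^sub>C x" by (rule scaleC_add_left)
  then show ?thesis by simp
qed

lemma scaleC_minus_right: "a *\<^sub>C (- x::'a::complex_inner) = - (a *\<^sub>C x)"
proof -
  have "a *\<^sub>C (- x) = a *\<^sub>C ((-1) *\<^sub>C x)" by (simp only: scaleC_minus1)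
  also have "\<dots> = (-1) *\<^sub>C (a *\<^sub>C x)" by (simp only: scaleC_scaleC mult.commute)
  finally show ?thesis by (simp only: scaleC_minus1)
qed

lemma scaleC_minus_left: "(- a) *\<^sub>C (x::'a::complex_inner) = - (a *\<^sub>C x)"
proof -
  have "(- a) *\<^sub>C x = ((-1) * a) *\<^sub>C x" by simp
  also have "\<dots> = (-1) *\<^sub>C (a *\<^sub>C x)" by (simp only: scaleC_scaleC)
  finally show ?thesis by (simp only: scaleC_minus1)
qed

lemma scaleC_diff_right: "a *\<^sub>C (x - y::'a::complex_inner) = a *\<^sub>C x - a *\<^sub>C y"
  by (simp only: diff_conv_add_uminus scaleC_add_right scaleC_minus_right)

lemma scaleC_diff_left: "(a - b) *\<^sub>C (x::'a::complex_inner) = a *\<^sub>C x - b *\<^sub>C x"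
  by (simp only: diff_conv_add_uminus scaleC_add_left scaleC_minus_left)

lemma cinner_self_real: "cinner x (x::'a::complex_inner) = complex_of_real ((norm x)\<^sup>2)"
proof -
  have "Im (cinner x x) = - Im (cinner x x)"
    using arg_cong[OF cinner_commute[of x x], of Im] by simp
  then have im: "Im (cinner x x) = 0" by simp
  have "(norm x)\<^sup>2 = Re (cinner x x)"
    using cinner_self_nonneg[of x] by (simp only: norm_eq_sqrt_cinner real_sqrt_pow2)
  then show ?thesis using im by (simp add: complex_eq_iff)
qed

lemma norm_sq_cinner: "(norm x)\<^sup>2 = Re (cinner x (x::'a::complex_inner))"
  by (simp only: cinner_self_real Re_complex_of_real)

lemma norm_scaleC: "norm (a *\<^sub>C (x::'a::complex_inner)) = cmod a * norm x"
proof -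
  have 1: "cinner (a *\<^sub>C x) (a *\<^sub>C x) = (a * cnj a) * cinner x x"
    by (simp only: cinner_scaleC_left cinner_scaleC_right mult.assoc mult.left_commute)
  have "(norm (a *\<^sub>C x))\<^sup>2 = Re (cinner (a *\<^sub>C x) (a *\<^sub>C x))" by (rule norm_sq_cinner)
  also have "\<dots> = Re (complex_of_real ((cmod a)\<^sup>2) * complex_of_real ((norm x)\<^sup>2))"
    unfolding 1 complex_norm_square cinner_self_real[of x, symmetric] ..
  also have "\<dots> = (cmod a * norm x)\<^sup>2"
    by (simp only: Re_complex_of_real of_real_mult[symmetric] power_mult_distrib)
  finally have "(norm (a *\<^sub>C x))\<^sup>2 = (cmod a * norm x)\<^sup>2" .
  then show ?thesis using power2_eq_iff_nonneg[of "norm (a *\<^sub>C x)" "cmod a * norm x"] by simp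
qed

lemma norm_add_sq: "(norm (x + y))\<^sup>2 = (norm x)\<^sup>2 + (norm y)\<^sup>2 + 2 * Re (cinner x (y::'a::complex_inner))"
proof -
  have "cinner (x+y) (x+y) = cinner x x + cinner y y + (cinner x y + cnj (cinner x y))"
    by (simp add: cinner_add_left cinner_add_right cinner_commute[of y x])
  then show ?thesis by (simp add: norm_sq_cinner)
qed

lemma norm_diff_sq: "(norm (x - y))\<^sup>2 = (norm x)\<^sup>2 + (norm y)\<^sup>2 - 2 * Re (cinner x (y::'a::complex_inner))"
  using norm_add_sq[of x "-y"] by (simp add: cinner_minus_right)

lemma cinner_i_right_Re: "Re (cinner x (\<i> *\<^sub>C y)) = Im (cinner x (y::'a::complex_inner))"
  by (simp add: cinner_scaleC_right)

lemma cauchy_schwarz_c: "cmod (cinner x y) \<le> norm x * norm (y::'a::complex_inner)"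
proof (cases "y = 0")
  case True then show ?thesis by simp
next
  case False
  define r where "r = (norm y)\<^sup>2"
  have r: "r > 0" using False by (simp add: r_def)
  define t where "t = cinner x y / complex_of_real r"
  have yy: "cinner y y = complex_of_real r" by (simp add: r_def cinner_self_real)
  have "cinner (x - t *\<^sub>C y) (x - t *\<^sub>C y) =
      cinner x x - cnj t * cinner x y - t * cinner y x + t * cnj t * cinner y y"
    by (simp add: cinner_diff_left cinner_diff_right cinner_scaleC_left cinner_scaleC_right algebra_simps)
  also have "\<dots> = cinner x x - complex_of_real ((cmod (cinner x y))\<^sup>2 / r)"
  proof -
    have e: "(complex_of_real (cmod (cinner x y)))\<^sup>2 = cinner x y * cnj (cinner x y)"
      by (metis complex_norm_square of_real_power)
    show ?thesis using r unfolding t_def yy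
      by (simp add: cinner_commute[of y x] field_simps e)
  qed
  finally have "0 \<le> (norm x)\<^sup>2 - (cmod (cinner x y))\<^sup>2 / r"
    using cinner_self_nonneg[of "x - t *\<^sub>C y"] by (simp add: norm_sq_cinner)
  then have "(cmod (cinner x y))\<^sup>2 \<le> (norm x)\<^sup>2 * (norm y)\<^sup>2"
    using r by (simp add: r_def field_simps)
  then have "(cmod (cinner x y))\<^sup>2 \<le> (norm x * norm y)\<^sup>2" by (simp add: power_mult_distrib)
  then show ?thesis by (rule power2_le_imp_le) simp
qed

lemma bounded_linear_cinner_left: "bounded_linear (\<lambda>x::'a::complex_inner. cinner x y)"
proof (rule bounded_linear_intro[where K="norm y"])
  show "cinner (x + z) y = cinner x y + cinner z y" for x z by (rule cinner_add_left)
  show "cinner (r *\<^sub>R x) y = r *\<^sub>R cinner x y" for r x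
    by (simp only: scaleR_scaleC[of r x] cinner_scaleC_left scaleR_conv_of_real)
  show "norm (cinner x y) \<le> norm x * norm y" for x by (rule cauchy_schwarz_c)
qed

lemma bounded_linear_cinner_right: "bounded_linear (\<lambda>y::'a::complex_inner. cinner x y)"
proof (rule bounded_linear_intro[where K="norm x"])
  show "cinner x (y + z) = cinner x y + cinner x z" for y z by (rule cinner_add_right)
  show "cinner x (r *\<^sub>R y) = r *\<^sub>R cinner x y" for r y
    by (simp only: scaleR_scaleC[of r y] cinner_scaleC_right scaleR_conv_of_real complex_cnj_complex_of_real)
  show "norm (cinner x y) \<le> norm y * norm x" for y using cauchy_schwarz_c[of x y] by (simp only: mult.commute)
qed

lemma tendsto_cinner_left: "(f \<longlongrightarrow> a) F \<Longrightarrow> ((\<lambda>t. cinner (f t) (y::'a::complex_inner)) \<longlongrightarrow> cinner a y) F"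
  by (rule bounded_linear.tendsto[OF bounded_linear_cinner_left])

lemma tendsto_cinner_right: "(f \<longlongrightarrow> a) F \<Longrightarrow> ((\<lambda>t. cinner (y::'a::complex_inner) (f t)) \<longlongrightarrow> cinner y a) F"
  by (rule bounded_linear.tendsto[OF bounded_linear_cinner_right])

lemma continuous_cinner_left: "continuous_on UNIV (\<lambda>x::'a::complex_inner. cinner x y)"
  by (rule linear_continuous_on[OF bounded_linear_cinner_left])

lemma continuous_cinner_right: "continuous_on UNIV (\<lambda>x::'a::complex_inner. cinner y x)"
  by (rule linear_continuous_on[OF bounded_linear_cinner_right])

lemma cinner_eq_zero_all: "(\<And>y. cinner x y = 0) \<Longrightarrow> x = (0::'a::complex_inner)"
proof -
  assume "\<And>y. cinner x y = 0"
  then have "cinner x x = 0" .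
  then show ?thesis by (rule cinner_self_eq_zero[THEN iffD1])
qed

lemma cinner_ext: "(\<And>y. cinner x y = cinner z y) \<Longrightarrow> x = (z::'a::complex_inner)"
proof -
  assume a: "\<And>y. cinner x y = cinner z y"
  have "x - z = 0"
  proof (rule cinner_eq_zero_all)
    fix y show "cinner (x - z) y = 0" using a[of y] by (simp only: cinner_diff_left diff_self)
  qed
  then show ?thesis by simp
qed

lemma cinner_ext_right: "(\<And>y. cinner y x = cinner y z) \<Longrightarrow> x = (z::'a::complex_inner)"
proof (rule cinner_ext)
  fix y assume "\<And>y. cinner y x = cinner y z"
  have "cinner x y = cnj (cinner y x)" by (rule cinner_commute)
  also have "\<dots> = cnj (cinner y z)" using \<open>\<And>y. cinner y x = cinner y z\<close> by simp
  also have "\<dots> = cinner z y" by (rule cinner_commute[symmetric])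
  finally show "cinner x y = cinner z y" .
qed

lemma clinear_add: "clinear T \<Longrightarrow> T (x + y) = T x + T y" by (simp add: clinear_def)
lemma clinear_scaleC: "clinear T \<Longrightarrow> T (a *\<^sub>C x) = a *\<^sub>C T x" by (simp add: clinear_def)
lemma clinear_zero: "clinear T \<Longrightarrow> T 0 = 0"
proof -
  assume a: "clinear T"
  have "T (0 + 0) = T 0 + T 0" by (rule clinear_add[OF a])
  then show ?thesis by simp
qed
lemma clinear_minus: "clinear T \<Longrightarrow> T (- x) = - T x"
proof -
  assume a: "clinear T"
  have "T ((-1) *\<^sub>C x) = (-1) *\<^sub>C T x" by (rule clinear_scaleC[OF a])
  then show ?thesis by (simp only: scaleC_minus1)
qed
lemma clinear_diff: "clinear T \<Longrightarrow> T (x - y) = T x - T y"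
  by (simp only: diff_conv_add_uminus clinear_add clinear_minus)

lemma isometry_cinner:
  assumes "clinear T" "\<And>x. norm (T x) = norm x"
  shows "cinner (T x) (T y) = cinner x y"
proof -
  have re: "Re (cinner (T x) (T y)) = Re (cinner x y)" for x y
  proof -
    have "norm (T x + T y) = norm (x + y)" using assms(2)[of "x+y"] clinear_add[OF assms(1), of x y] by simp
    then show ?thesis using norm_add_sq[of "T x" "T y"] norm_add_sq[of x y] assms(2) by simp
  qed
  have "Im (cinner (T x) (T y)) = Im (cinner x y)"
    using re[of x "\<i> *\<^sub>C y"] by (simp add: clinear_scaleC[OF assms(1)] cinner_i_right_Re[symmetric])
  with re show ?thesis by (simp add: complex_eq_iff)
qed

lemma norm_sub_proj_sq:
  assumes "y \<noteq> 0"
  shows "(norm (u - (cinner u y / complex_of_real ((norm y)\<^sup>2)) *\<^sub>C y))\<^sup>2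
          = (norm u)\<^sup>2 - (cmod (cinner u y))\<^sup>2 / (norm y)\<^sup>2"
proof -
  define r where "r = (norm y)\<^sup>2"
  have r: "r > 0" using assms by (simp add: r_def)
  define t where "t = cinner u y / complex_of_real r"
  have yy: "cinner y y = complex_of_real r" by (simp add: r_def cinner_self_real)
  have "cinner (u - t *\<^sub>C y) (u - t *\<^sub>C y) =
      cinner u u - cnj t * cinner u y - t * cinner y u + t * cnj t * cinner y y"
    by (simp add: cinner_diff_left cinner_diff_right cinner_scaleC_left cinner_scaleC_right algebra_simps)
  also have "\<dots> = cinner u u - complex_of_real ((cmod (cinner u y))\<^sup>2 / r)"
  proof -
    have e: "(complex_of_real (cmod (cinner u y)))\<^sup>2 = cinner u y * cnj (cinner u y)"
      by (metis complex_norm_square of_real_power)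
    show ?thesis using r unfolding t_def yy
      by (simp add: cinner_commute[of y u] field_simps e)
  qed
  finally show ?thesis unfolding r_def[symmetric] t_def[symmetric]
    by (simp add: norm_sq_cinner)
qed

lemma parallelogram: "(norm (a + b))\<^sup>2 + (norm (a - b))\<^sup>2 = 2 * (norm a)\<^sup>2 + 2 * (norm (b::'a::complex_inner))\<^sup>2"
  using norm_add_sq[of a b] norm_diff_sq[of a b] by simp

lemma closed_csubspace_diff: "closed_csubspace M \<Longrightarrow> x \<in> M \<Longrightarrow> y \<in> M \<Longrightarrow> x - y \<in> M"
  unfolding closed_csubspace_def
  by (metis diff_conv_add_uminus scaleC_minus1)

lemma closed_csubspace_scaleR: "closed_csubspace M \<Longrightarrow> x \<in> M \<Longrightarrow> r *\<^sub>R x \<in> M"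
  unfolding closed_csubspace_def by (simp add: scaleR_scaleC)

lemma projection_exists:
  fixes x :: "'a::chilbert"
  assumes M: "closed_csubspace M"
  shows "\<exists>p\<in>M. \<forall>y\<in>M. cinner (x - p) y = 0"
proof -
  have M0: "0 \<in> M" and Madd: "\<And>a b. a \<in> M \<Longrightarrow> b \<in> M \<Longrightarrow> a + b \<in> M"
    and Msc: "\<And>c a. a \<in> M \<Longrightarrow> c *\<^sub>C a \<in> M" and Mcl: "closed M"
    using M unfolding closed_csubspace_def by auto
  define D where "D = (\<lambda>m. norm (x - m)) ` M"
  define d where "d = Inf D"
  have Dne: "D \<noteq> {}" using M0 by (auto simp: D_def)
  have Dbdd: "bdd_below D" unfolding D_def by (rule bdd_belowI[of _ 0]) auto
  have d_le: "d \<le> norm (x - m)" if "m \<in> M" for m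
    unfolding d_def using that Dbdd by (auto simp: D_def intro: cInf_lower)
  have d0: "0 \<le> d" unfolding d_def using Dne by (auto simp: D_def intro: cInf_greatest)
  have "\<exists>m\<in>M. norm (x - m) < d + 1 / (real n + 1)" for n
  proof -
    have "d < d + 1 / (real n + 1)" by simp
    then obtain e where "e \<in> D" "e < d + 1 / (real n + 1)"
      using cInf_lessD[OF Dne] unfolding d_def by blast
    then show ?thesis by (auto simp: D_def)
  qed
  then obtain ms where ms: "\<And>n. ms n \<in> M" "\<And>n. norm (x - ms n) < d + 1 / (real n + 1)"
    by metis
  have sq: "(norm (x - ms n))\<^sup>2 \<le> d\<^sup>2 + (2 * d + 1) / (real n + 1)" for n
  proof -
    have a: "0 \<le> norm (x - ms n)" by simp
    have "(norm (x - ms n))\<^sup>2 \<le> (d + 1 / (real n + 1))\<^sup>2"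
      using ms(2)[of n] a by (intro power_mono) auto
    also have "\<dots> = d\<^sup>2 + (2 * d + 1 / (real n + 1)) / (real n + 1)"
    proof -
      have k: "real n + 1 \<noteq> 0" by simp
      show ?thesis by (simp add: power2_eq_square add_divide_distrib diff_divide_distrib k algebra_simps)
    qed
    also have "\<dots> \<le> d\<^sup>2 + (2 * d + 1) / (real n + 1)"
      by (intro add_left_mono divide_right_mono) auto
    finally show ?thesis .
  qed
  have mid: "d\<^sup>2 \<le> (norm (x - (1/2) *\<^sub>R (ms a + ms b)))\<^sup>2" for a b
  proof -
    have "(1/2) *\<^sub>R (ms a + ms b) \<in> M" by (intro closed_csubspace_scaleR[OF M] Madd ms)
    then have "d \<le> norm (x - (1/2) *\<^sub>R (ms a + ms b))" by (rule d_le)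
    then show ?thesis using d0 by (intro power_mono) auto
  qed
  have dist_ms: "(norm (ms a - ms b))\<^sup>2 \<le> 2 * (2 * d + 1) * (1 / (real a + 1) + 1 / (real b + 1))" for a b
  proof -
    have par: "(norm ((x - ms a) + (x - ms b)))\<^sup>2 + (norm ((x - ms a) - (x - ms b)))\<^sup>2
        = 2 * (norm (x - ms a))\<^sup>2 + 2 * (norm (x - ms b))\<^sup>2" by (rule parallelogram)
    have e1: "(x - ms a) + (x - ms b) = 2 *\<^sub>R (x - (1/2) *\<^sub>R (ms a + ms b))"
      by (simp add: algebra_simps scaleR_2)
    have e2: "(x - ms a) - (x - ms b) = ms b - ms a" by simp
    have "(norm ((x - ms a) + (x - ms b)))\<^sup>2 = 4 * (norm (x - (1/2) *\<^sub>R (ms a + ms b)))\<^sup>2"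
      unfolding e1 by (simp add: power2_eq_square)
    then have "(norm (ms b - ms a))\<^sup>2 \<le> 2 * (norm (x - ms a))\<^sup>2 + 2 * (norm (x - ms b))\<^sup>2 - 4 * d\<^sup>2"
      using par mid[of a b] unfolding e2 by linarith
    also have "\<dots> \<le> 2 * (d\<^sup>2 + (2 * d + 1) / (real a + 1)) + 2 * (d\<^sup>2 + (2 * d + 1) / (real b + 1)) - 4 * d\<^sup>2"
      using sq[of a] sq[of b] by (intro diff_right_mono add_mono mult_left_mono) auto
    also have "\<dots> = 2 * (2 * d + 1) * (1 / (real a + 1) + 1 / (real b + 1))"
      unfolding divide_inverse by (simp add: algebra_simps)
    finally show ?thesis by (simp add: norm_minus_commute)
  qed
  have "Cauchy ms"
  proof (rule metric_CauchyI)
    fix e :: real assume e: "e > 0"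
    obtain N :: nat where N: "4 * (2 * d + 1) / e\<^sup>2 < real N"
      using reals_Archimedean2 by blast
    have "dist (ms a) (ms b) < e" if "a \<ge> N" "b \<ge> N" for a b
    proof -
      have pos: "0 < 2 * d + 1" using d0 by simp
      have "1 / (real a + 1) < e\<^sup>2 / (4 * (2 * d + 1))"
      proof -
        have "4 * (2 * d + 1) / e\<^sup>2 < real a + 1" using N that by linarith
        then show ?thesis using e pos by (simp add: field_simps)
      qed
      moreover have "1 / (real b + 1) < e\<^sup>2 / (4 * (2 * d + 1))"
      proof -
        have "4 * (2 * d + 1) / e\<^sup>2 < real b + 1" using N that by linarith
        then show ?thesis using e pos by (simp add: field_simps)
      qed
      ultimately have "2 * (2 * d + 1) * (1 / (real a + 1) + 1 / (real b + 1)) < 2 * (2 * d + 1) * (2 * (e\<^sup>2 / (4 * (2 * d + 1))))"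
        using pos by (intro mult_strict_left_mono) auto
      also have "\<dots> = e\<^sup>2" using pos by (simp add: field_simps)
      finally have "(norm (ms a - ms b))\<^sup>2 < e\<^sup>2" using dist_ms[of a b] by linarith
      then show ?thesis using e by (simp add: dist_norm power2_less_imp_less)
    qed
    then show "\<exists>M. \<forall>m\<ge>M. \<forall>n\<ge>M. dist (ms m) (ms n) < e" by blast
  qed
  then obtain p where p: "ms \<longlonglongrightarrow> p" using Cauchy_convergent_iff convergent_def by blast
  have pM: "p \<in> M" using Mcl ms(1) p closed_sequentially by blast
  have "(\<lambda>n. norm (x - ms n)) \<longlonglongrightarrow> norm (x - p)"
    by (intro tendsto_intros p)
  moreover have "(\<lambda>n. norm (x - ms n)) \<longlonglongrightarrow> d"
  proof (rule real_tendsto_sandwich[of "\<lambda>n. d" _ _ "\<lambda>n. d + 1 / (real n + 1)"])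
    show "\<forall>\<^sub>F n in sequentially. d \<le> norm (x - ms n)" using d_le ms(1) by auto
    show "\<forall>\<^sub>F n in sequentially. norm (x - ms n) \<le> d + 1 / (real n + 1)" using ms(2) by (intro always_eventually allI less_imp_le)
    show "(\<lambda>n. d) \<longlonglongrightarrow> d" by simp
    have "(\<lambda>n. 1 / (real n + 1)) \<longlonglongrightarrow> 0" using LIMSEQ_Suc[OF lim_inverse_n'] by (simp add: add.commute)
    then show "(\<lambda>n. d + 1 / (real n + 1)) \<longlonglongrightarrow> d" using tendsto_add[of "\<lambda>n. d" d sequentially] by fastforce
  qed
  ultimately have pd: "norm (x - p) = d" using LIMSEQ_unique by blast
  have "cinner (x - p) y = 0" if y: "y \<in> M" for y
  proof (rule ccontr)
    assume ne: "cinner (x - p) y \<noteq> 0"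
    then have y0: "y \<noteq> 0" by auto
    define t where "t = cinner (x - p) y / complex_of_real ((norm y)\<^sup>2)"
    have "p + t *\<^sub>C y \<in> M" using pM y by (intro Madd Msc)
    then have "d \<le> norm (x - (p + t *\<^sub>C y))" by (rule d_le)
    then have "d\<^sup>2 \<le> (norm ((x - p) - t *\<^sub>C y))\<^sup>2" using d0 by (simp add: algebra_simps power_mono)
    also have "\<dots> = (norm (x - p))\<^sup>2 - (cmod (cinner (x - p) y))\<^sup>2 / (norm y)\<^sup>2"
      unfolding t_def by (rule norm_sub_proj_sq[OF y0])
    finally have "(cmod (cinner (x - p) y))\<^sup>2 / (norm y)\<^sup>2 \<le> 0" using pd by simp
    moreover have "(cmod (cinner (x - p) y))\<^sup>2 / (norm y)\<^sup>2 > 0" using ne y0 by simp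
    ultimately show False by linarith
  qed
  then show ?thesis using pM by blast
qed

lemma riesz:
  fixes f :: "'a::chilbert \<Rightarrow> complex"
  assumes add: "\<And>x y. f (x + y) = f x + f y" and sc: "\<And>a x. f (a *\<^sub>C x) = a * f x"
    and bd: "\<And>x. cmod (f x) \<le> norm x * K"
  shows "\<exists>z. \<forall>x. f x = cinner x z"
proof -
  have bl: "bounded_linear f"
  proof (rule bounded_linear_intro[where K=K])
    show "f (x + y) = f x + f y" for x y by (rule add)
    show "f (r *\<^sub>R x) = r *\<^sub>R f x" for r x
      by (simp only: scaleR_scaleC[of r x] sc scaleR_conv_of_real)
    show "norm (f x) \<le> norm x * K" for x using bd by simp
  qed
  show ?thesis
  proof (cases "\<forall>x. f x = 0")
    case True
    then show ?thesis by (intro exI[of _ 0]) simp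
  next
    case False
    then obtain x0 where x0: "f x0 \<noteq> 0" by blast
    define N where "N = {x. f x = 0}"
    have f0: "f 0 = 0" using add[of 0 0] by simp
    have fm: "f (- x) = - f x" for x using sc[of "-1" x] by (simp add: scaleC_minus1)
    have fd: "f (x - y) = f x - f y" for x y
      by (simp only: diff_conv_add_uminus add fm)
    have N: "closed_csubspace N"
      unfolding closed_csubspace_def
    proof (intro conjI ballI allI)
      have "closed {x. f x = (\<lambda>_. 0) x}"
        by (rule closed_Collect_eq[OF linear_continuous_on[OF bl] continuous_on_const])
      then show "closed N" unfolding N_def by simp
      show "0 \<in> N" unfolding N_def using f0 by simp
      show "x + y \<in> N" if "x \<in> N" "y \<in> N" for x y
        using that unfolding N_def by (simp add: add)
      show "a *\<^sub>C x \<in> N" if "x \<in> N" for a x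
        using that unfolding N_def by (simp add: sc)
    qed
    obtain p where p: "p \<in> N" "\<And>y. y \<in> N \<Longrightarrow> cinner (x0 - p) y = 0"
      using projection_exists[OF N] by blast
    define w where "w = x0 - p"
    have fw: "f w = f x0" using p(1) unfolding w_def N_def
      by (simp add: fd)
    have w0: "w \<noteq> 0" using fw x0 f0 by auto
    have key: "cinner x w = (f x / f w) * cinner w w" for x
    proof -
      have "x - (f x / f w) *\<^sub>C w \<in> N" unfolding N_def
        using fw x0 by (simp add: fd sc)
      then have "cinner w (x - (f x / f w) *\<^sub>C w) = 0" using p(2) unfolding w_def by blast
      then have "cinner (x - (f x / f w) *\<^sub>C w) w = 0"
        using cinner_commute[of w "x - (f x / f w) *\<^sub>C w"] by simp
      then show ?thesis by (simp add: cinner_diff_left cinner_scaleC_left)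
    qed
    define z where "z = (cnj (f w) / complex_of_real ((norm w)\<^sup>2)) *\<^sub>C w"
    have "f x = cinner x z" for x
    proof -
      have ww: "cinner w w = complex_of_real ((norm w)\<^sup>2)" by (rule cinner_self_real)
      have nz: "complex_of_real ((norm w)\<^sup>2) \<noteq> 0" using w0 by simp
      have "cinner x z = (f w / complex_of_real ((norm w)\<^sup>2)) * cinner x w"
        unfolding z_def cinner_scaleC_right by simp
      also have "\<dots> = f x" unfolding key[of x] ww using nz fw x0 by (simp add: field_simps)
      finally show ?thesis by simp
    qed
    then show ?thesis by blast
  qed
qed

definition is_adj :: "('a::chilbert \<Rightarrow> 'a) \<Rightarrow> ('a \<Rightarrow> 'a) \<Rightarrow> bool" where
  "is_adj T S \<longleftrightarrow> (\<forall>x y. cinner (T x) y = cinner x (S y))"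

lemma adj_unique: "is_adj T S \<Longrightarrow> adj T = S"
  unfolding adj_def
proof (rule the_equality)
  assume "is_adj T S"
  then show "\<forall>x y. cinner (T x) y = cinner x (S y)" by (simp add: is_adj_def)
  fix S' assume a: "\<forall>x y. cinner (T x) y = cinner x (S' y)"
  show "S' = S"
  proof
    fix y show "S' y = S y"
    proof (rule cinner_ext_right)
      fix x show "cinner x (S' y) = cinner x (S y)"
        using a \<open>is_adj T S\<close> unfolding is_adj_def by (metis (no_types))
    qed
  qed
qed

lemma adj_exists:
  assumes "cbounded_linear T"
  shows "\<exists>S. is_adj T S"
proof -
  obtain K where K: "\<And>x. norm (T x) \<le> norm x * K" and lin: "clinear T"
    using assms unfolding cbounded_linear_def by blast
  have "\<exists>z. \<forall>x. cinner (T x) y = cinner x z" for y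
  proof (rule riesz[where K="K * norm y"])
    show "cinner (T (x + x')) y = cinner (T x) y + cinner (T x') y" for x x'
      by (simp add: clinear_add[OF lin] cinner_add_left)
    show "cinner (T (a *\<^sub>C x)) y = a * cinner (T x) y" for a x
      by (simp add: clinear_scaleC[OF lin] cinner_scaleC_left)
    show "cmod (cinner (T x) y) \<le> norm x * (K * norm y)" for x
    proof -
      have "cmod (cinner (T x) y) \<le> norm (T x) * norm y" by (rule cauchy_schwarz_c)
      also have "\<dots> \<le> norm x * K * norm y" using K[of x] by (simp add: mult_right_mono)
      finally show ?thesis by (simp add: mult.assoc)
    qed
  qed
  then have "\<forall>y. \<exists>z. \<forall>x. cinner (T x) y = cinner x z" by blast
  then obtain S where "\<forall>y. \<forall>x. cinner (T x) y = cinner x (S y)" by metis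
  then show ?thesis unfolding is_adj_def by blast
qed

lemma adj_is_adj: "cbounded_linear T \<Longrightarrow> is_adj T (adj T)"
  using adj_exists adj_unique by blast

lemma adj_prop: "cbounded_linear T \<Longrightarrow> cinner (T x) y = cinner x (adj T y)"
  using adj_is_adj unfolding is_adj_def by blast

lemma adj_prop': "cbounded_linear T \<Longrightarrow> cinner (adj T y) x = cinner y (T x)"
proof -
  assume a: "cbounded_linear T"
  have "cinner (adj T y) x = cnj (cinner x (adj T y))" by (rule cinner_commute)
  also have "\<dots> = cnj (cinner (T x) y)" by (simp only: adj_prop[OF a])
  also have "\<dots> = cinner y (T x)" by (rule cinner_commute[symmetric])
  finally show ?thesis .
qed

lemma is_adj_sym: "is_adj T S \<Longrightarrow> is_adj S T"
  unfolding is_adj_def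
proof (intro allI)
  fix x y assume a: "\<forall>x y. cinner (T x) y = cinner x (S y)"
  have "cinner (S x) y = cnj (cinner y (S x))" by (rule cinner_commute)
  also have "\<dots> = cnj (cinner (T y) x)" using a by simp
  also have "\<dots> = cinner x (T y)" by (rule cinner_commute[symmetric])
  finally show "cinner (S x) y = cinner x (T y)" .
qed

lemma isometry_bl: "isometry V \<Longrightarrow> cbounded_linear V" by (simp add: isometry_def)
lemma isometry_lin: "isometry V \<Longrightarrow> clinear V" by (simp add: isometry_def cbounded_linear_def)
lemma isometry_norm: "isometry V \<Longrightarrow> norm (V x) = norm x" by (simp add: isometry_def)

lemma isometry_cinner': "isometry V \<Longrightarrow> cinner (V x) (V y) = cinner x y"
  by (rule isometry_cinner[OF isometry_lin isometry_norm])

lemma isometry_adj_left: "isometry V \<Longrightarrow> adj V (V x) = x"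
proof -
  assume a: "isometry V"
  show ?thesis
  proof (rule cinner_ext_right)
    fix y show "cinner y (adj V (V x)) = cinner y x"
      using adj_prop[OF isometry_bl[OF a], of y "V x"] isometry_cinner'[OF a] by simp
  qed
qed

lemma is_adj_add: "is_adj T S \<Longrightarrow> S (x + y) = S x + S y"
proof (rule cinner_ext_right)
  fix z assume "is_adj T S"
  then have a: "\<And>x y. cinner x (S y) = cinner (T x) y" unfolding is_adj_def by simp
  show "cinner z (S (x + y)) = cinner z (S x + S y)" by (simp add: a cinner_add_right)
qed

lemma is_adj_scaleC: "is_adj T S \<Longrightarrow> S (a *\<^sub>C x) = a *\<^sub>C S x"
proof (rule cinner_ext_right)
  fix z assume "is_adj T S"
  then have a: "\<And>x y. cinner x (S y) = cinner (T x) y" unfolding is_adj_def by simp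
  show "cinner z (S (a *\<^sub>C x)) = cinner z (a *\<^sub>C S x)" by (simp add: a cinner_scaleC_right)
qed

lemma is_adj_lin: "is_adj T S \<Longrightarrow> clinear S"
  unfolding clinear_def using is_adj_add is_adj_scaleC by blast

lemma is_adj_comp: "is_adj T S \<Longrightarrow> is_adj T' S' \<Longrightarrow> is_adj (T \<circ> T') (S' \<circ> S)"
  unfolding is_adj_def by simp

lemma adj_lin: "cbounded_linear T \<Longrightarrow> clinear (adj T)"
  by (rule is_adj_lin[OF adj_is_adj])

interpretation cvs: vector_space "scaleC :: complex \<Rightarrow> 'a \<Rightarrow> 'a::complex_inner"
  by unfold_locales (simp_all add: scaleC_add_right scaleC_add_left scaleC_scaleC scaleC_one)

lemma crank_eq: "crank T = cvs.dim (range T)"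
  by (simp add: crank_def)

lemma rank1_range:
  fixes T :: "'a::chilbert \<Rightarrow> 'a"
  assumes lin: "clinear T" and d: "cvs.dim (range T) = 1"
  shows "\<exists>w. w \<noteq> 0 \<and> range T = range (\<lambda>k. k *\<^sub>C w)"
proof -
  obtain B where B: "B \<subseteq> range T" "cvs.independent B" "range T \<subseteq> cvs.span B" "card B = cvs.dim (range T)"
    by (rule cvs.basis_exists)
  then have "card B = 1" using d by simp
  then obtain w where Bw: "B = {w}" by (rule card_1_singletonE)
  have w0: "w \<noteq> 0" using B(2) Bw by simp
  have sub: "cvs.subspace (range T)"
    unfolding cvs.subspace_def
  proof (intro conjI ballI allI)
    have "T 0 \<in> range T" by (rule rangeI)
    then show "0 \<in> range T" by (simp add: clinear_zero[OF lin])
    show "x + y \<in> range T" if xy: "x \<in> range T" "y \<in> range T" for x y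
    proof -
      obtain a b where "x = T a" "y = T b" using xy by blast
      then have "x + y = T (a + b)" by (simp add: clinear_add[OF lin])
      then show ?thesis by simp
    qed
    show "c *\<^sub>C x \<in> range T" if xr: "x \<in> range T" for c x
    proof -
      obtain a where "x = T a" using xr by blast
      then have "c *\<^sub>C x = T (c *\<^sub>C a)" by (simp add: clinear_scaleC[OF lin])
      then show ?thesis by simp
    qed
  qed
  have "cvs.span {w} = range T"
    using cvs.span_subspace[of "{w}" "range T"] B Bw sub by simp
  then have "range T = range (\<lambda>k. k *\<^sub>C w)" using cvs.span_singleton[of w] by simp
  then show ?thesis using w0 by blast
qed

lemma dim_line:
  fixes w :: "'a::chilbert"
  assumes "w \<noteq> 0"
  shows "cvs.dim (range (\<lambda>k. k *\<^sub>C w)) = 1"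
proof -
  have "cvs.dim (range (\<lambda>k. k *\<^sub>C w)) = cvs.dim (cvs.span {w})"
    by (simp add: cvs.span_singleton)
  also have "\<dots> = cvs.dim {w}" by (rule cvs.dim_span)
  also have "\<dots> = 1" using assms by (simp add: cvs.dim_eq_card_independent)
  finally show ?thesis .
qed

lemma rank1_form:
  fixes C :: "'a::chilbert \<Rightarrow> 'a"
  assumes sa: "is_adj C C" and lin: "clinear C" and w0: "w \<noteq> 0"
    and rng: "range C = range (\<lambda>k. k *\<^sub>C w)"
  shows "\<exists>u \<beta>. norm u = 1 \<and> \<beta> \<noteq> 0 \<and> (\<forall>x. C x = (complex_of_real \<beta> * cinner x u) *\<^sub>C u)"
proof -
  define u where "u = complex_of_real (1 / norm w) *\<^sub>C w"
  have nu: "norm u = 1" using w0 by (simp add: u_def norm_scaleC norm_divide)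
  have uu: "cinner u u = 1" using nu by (simp add: cinner_self_real)
  have rng': "\<exists>k. C x = k *\<^sub>C u" for x
  proof -
    have "C x \<in> range (\<lambda>k. k *\<^sub>C w)" using rng by blast
    then obtain k where k: "C x = k *\<^sub>C w" by blast
    have wu: "w = complex_of_real (norm w) *\<^sub>C u" using w0 by (simp add: u_def scaleC_scaleC)
    have "C x = k *\<^sub>C (complex_of_real (norm w) *\<^sub>C u)" using k wu by metis
    then have "C x = (k * complex_of_real (norm w)) *\<^sub>C u" by (simp only: scaleC_scaleC)
    then show ?thesis by blast
  qed
  obtain \<gamma> where g: "C u = \<gamma> *\<^sub>C u" using rng' by blast
  have sa': "cinner (C x) y = cinner x (C y)" for x y using sa unfolding is_adj_def by blast
  have form: "C x = (cnj \<gamma> * cinner x u) *\<^sub>C u" for x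
  proof -
    obtain k where k: "C x = k *\<^sub>C u" using rng' by blast
    have "k = cinner (C x) u" using k uu by (simp add: cinner_scaleC_left)
    also have "\<dots> = cinner x (C u)" by (rule sa')
    also have "\<dots> = cnj \<gamma> * cinner x u" by (simp add: g cinner_scaleC_right)
    finally show ?thesis using k by simp
  qed
  have greal: "cnj \<gamma> = \<gamma>"
  proof -
    have "\<gamma> = cinner (C u) u" using g uu by (simp add: cinner_scaleC_left)
    also have "\<dots> = cinner u (C u)" by (rule sa')
    also have "\<dots> = cnj \<gamma>" using g uu by (simp add: cinner_scaleC_right)
    finally show ?thesis by simp
  qed
  then have "Im \<gamma> = 0" by (simp add: complex_eq_iff)
  then have gre: "\<gamma> = complex_of_real (Re \<gamma>)" by (simp add: complex_eq_iff)
  have "Re \<gamma> \<noteq> 0"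
  proof
    assume "Re \<gamma> = 0"
    then have "\<gamma> = 0" using gre by simp
    then have "\<forall>x. C x = 0" using form greal by simp
    moreover have "u \<in> range C" using rng w0 unfolding u_def by blast
    ultimately show False using nu by auto
  qed
  moreover have "\<forall>x. C x = (complex_of_real (Re \<gamma>) * cinner x u) *\<^sub>C u"
    using form greal gre by simp
  ultimately show ?thesis using nu by blast
qed

lemma isometric_pair_sym: "isometric_pair V1 V2 \<Longrightarrow> isometric_pair V2 V1"
  unfolding isometric_pair_def by auto

locale ipair =
  fixes V1 V2 :: "'a::chilbert \<Rightarrow> 'a"
  assumes ip: "isometric_pair V1 V2"
begin

abbreviation "A1 \<equiv> adj V1"
abbreviation "A2 \<equiv> adj V2"

lemma iso1: "isometry V1" and iso2: "isometry V2"
  using ip unfolding isometric_pair_def by auto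

lemma bl1: "cbounded_linear V1" and bl2: "cbounded_linear V2"
  using iso1 iso2 isometry_bl by auto

lemma lin1: "clinear V1" and lin2: "clinear V2"
  using iso1 iso2 isometry_lin by auto

lemma alin1: "clinear A1" and alin2: "clinear A2"
  using bl1 bl2 adj_lin by auto

lemma adj1: "cinner (V1 x) y = cinner x (A1 y)" by (rule adj_prop[OF bl1])
lemma adj2: "cinner (V2 x) y = cinner x (A2 y)" by (rule adj_prop[OF bl2])
lemma adj1': "cinner (A1 y) x = cinner y (V1 x)" by (rule adj_prop'[OF bl1])
lemma adj2': "cinner (A2 y) x = cinner y (V2 x)" by (rule adj_prop'[OF bl2])

lemma AV1[simp]: "A1 (V1 x) = x" by (rule isometry_adj_left[OF iso1])
lemma AV2[simp]: "A2 (V2 x) = x" by (rule isometry_adj_left[OF iso2])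

lemma nV1[simp]: "norm (V1 x) = norm x" by (rule isometry_norm[OF iso1])
lemma nV2[simp]: "norm (V2 x) = norm x" by (rule isometry_norm[OF iso2])

lemma comm: "V1 (V2 x) = V2 (V1 x)"
proof -
  have "V1 \<circ> V2 = V2 \<circ> V1" using ip unfolding isometric_pair_def by auto
  then show ?thesis by (metis comp_apply)
qed

lemma Acomm: "A1 (A2 x) = A2 (A1 x)"
proof (rule cinner_ext_right)
  fix y
  have "cinner y (A1 (A2 x)) = cinner (V2 (V1 y)) x" by (simp only: adj1[symmetric] adj2[symmetric])
  also have "\<dots> = cinner (V1 (V2 y)) x" by (simp only: comm)
  also have "\<dots> = cinner y (A2 (A1 x))" by (simp only: adj1 adj2)
  finally show "cinner y (A1 (A2 x)) = cinner y (A2 (A1 x))" .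
qed

lemma A1_0[simp]: "A1 0 = 0" by (rule clinear_zero[OF alin1])
lemma A2_0[simp]: "A2 0 = 0" by (rule clinear_zero[OF alin2])
lemma V1_0[simp]: "V1 0 = 0" by (rule clinear_zero[OF lin1])
lemma V2_0[simp]: "V2 0 = 0" by (rule clinear_zero[OF lin2])

lemmas lins = clinear_add[OF lin1] clinear_add[OF lin2] clinear_add[OF alin1] clinear_add[OF alin2]
  clinear_diff[OF lin1] clinear_diff[OF lin2] clinear_diff[OF alin1] clinear_diff[OF alin2]
  clinear_scaleC[OF lin1] clinear_scaleC[OF lin2] clinear_scaleC[OF alin1] clinear_scaleC[OF alin2]

abbreviation "CC \<equiv> defect_op V1 V2"
abbreviation "KK \<equiv> cross_comm V1 V2"

lemma CC_def': "CC x = x - V1 (A1 x) - V2 (A2 x) + V1 (V2 (A1 (A2 x)))"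
  by (simp add: defect_op_def)

lemma KK_def': "KK x = A2 (V1 x) - V1 (A2 x)"
  by (simp add: cross_comm_def)

lemma CC_lin: "clinear CC"
  unfolding clinear_def CC_def' by (simp add: lins scaleC_add_right scaleC_diff_right algebra_simps)

lemma KK_lin: "clinear KK"
  unfolding clinear_def KK_def' by (simp add: lins scaleC_diff_right algebra_simps)

lemma norm_KK: "(norm (KK x))\<^sup>2 = (norm (A2 (V1 x)))\<^sup>2 - (norm (A2 x))\<^sup>2"
proof -
  have i: "cinner (A2 (V1 x)) (V1 (A2 x)) = cinner (A2 x) (A2 x)"
  proof -
    have "cinner (A2 (V1 x)) (V1 (A2 x)) = cinner (A1 (A2 (V1 x))) (A2 x)" by (simp only: adj1')
    also have "A1 (A2 (V1 x)) = A2 x" by (simp only: Acomm AV1)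
    finally show ?thesis .
  qed
  have "(norm (KK x))\<^sup>2 = (norm (A2 (V1 x)))\<^sup>2 + (norm (V1 (A2 x)))\<^sup>2 - 2 * Re (cinner (A2 (V1 x)) (V1 (A2 x)))"
    unfolding KK_def' by (rule norm_diff_sq)
  also have "\<dots> = (norm (A2 (V1 x)))\<^sup>2 + (norm (A2 x))\<^sup>2 - 2 * (norm (A2 x))\<^sup>2"
    by (simp only: i nV1 norm_sq_cinner)
  finally show ?thesis by simp
qed

lemma CC_V1: "Re (cinner (CC (V1 x)) (V1 x)) = - (norm (KK x))\<^sup>2"
proof -
  define y where "y = V1 x"
  have t1: "cinner (V1 (A1 y)) y = cinner x x" by (simp add: y_def adj1)
  have t2: "cinner (V2 (A2 y)) y = cinner (A2 y) (A2 y)" by (simp add: adj2)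
  have t3: "cinner (V1 (V2 (A1 (A2 y)))) y = cinner (A2 x) (A2 x)"
  proof -
    have a: "A1 (A2 y) = A2 x" by (simp add: y_def Acomm)
    have b: "A2 (A1 y) = A2 x" by (simp add: y_def)
    have "cinner (V1 (V2 (A1 (A2 y)))) y = cinner (A1 (A2 y)) (A2 (A1 y))" by (simp only: adj1 adj2)
    then show ?thesis by (simp only: a b)
  qed
  have t0: "cinner y y = cinner x x" by (simp add: y_def isometry_cinner'[OF iso1])
  have "cinner (CC y) y = cinner y y - cinner (V1 (A1 y)) y - cinner (V2 (A2 y)) y + cinner (V1 (V2 (A1 (A2 y)))) y"
    unfolding CC_def' by (simp only: cinner_add_left cinner_diff_left)
  also have "\<dots> = - cinner (A2 y) (A2 y) + cinner (A2 x) (A2 x)"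
    by (simp only: t0 t1 t2 t3) simp
  finally have "Re (cinner (CC y) y) = - (norm (A2 (V1 x)))\<^sup>2 + (norm (A2 x))\<^sup>2"
    by (simp add: y_def norm_sq_cinner)
  then show ?thesis unfolding y_def norm_KK by simp
qed

lemma VCC: "A1 (A2 (CC x)) = 0"
proof -
  have e1: "A1 (A2 (V1 (A1 x))) = A1 (A2 x)" by (simp only: Acomm AV1)
  have e2: "A1 (A2 (V2 (A2 x))) = A1 (A2 x)" by (simp only: AV2)
  have e3: "A1 (A2 (V1 (V2 (A1 (A2 x))))) = A1 (A2 x)" by (simp only: Acomm AV1 comm AV2)
  show ?thesis unfolding CC_def' by (simp only: lins e1 e2 e3) simp
qed

lemma CC_sa: "is_adj CC CC"
  unfolding is_adj_def
proof (intro allI)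
  fix x y
  have t1: "cinner (V1 (A1 x)) y = cinner x (V1 (A1 y))" by (simp only: adj1 adj1')
  have t2: "cinner (V2 (A2 x)) y = cinner x (V2 (A2 y))" by (simp only: adj2 adj2')
  have t3: "cinner (V1 (V2 (A1 (A2 x)))) y = cinner x (V1 (V2 (A1 (A2 y))))"
  proof -
    have "cinner (V1 (V2 (A1 (A2 x)))) y = cinner (A1 (A2 x)) (A2 (A1 y))" by (simp only: adj1 adj2)
    also have "\<dots> = cinner (A2 (A1 x)) (A1 (A2 y))" by (simp only: Acomm)
    also have "\<dots> = cinner x (V1 (V2 (A1 (A2 y))))" by (simp only: adj1' adj2')
    finally show ?thesis .
  qed
  show "cinner (CC x) y = cinner x (CC y)"
    unfolding CC_def' by (simp only: cinner_add_left cinner_diff_left cinner_add_right cinner_diff_right t1 t2 t3)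
qed

lemma KK_adj: "is_adj KK (cross_comm V2 V1)"
  unfolding is_adj_def
proof (intro allI)
  fix x y
  have "cinner (KK x) y = cinner (A2 (V1 x)) y - cinner (V1 (A2 x)) y"
    unfolding KK_def' by (rule cinner_diff_left)
  also have "\<dots> = cinner x (A1 (V2 y)) - cinner x (V2 (A1 y))"
    by (simp only: adj1 adj2 adj2')
  also have "\<dots> = cinner x (cross_comm V2 V1 y)"
    by (simp add: cross_comm_def cinner_diff_right)
  finally show "cinner (KK x) y = cinner x (cross_comm V2 V1 y)" .
qed

lemma adj_KK: "adj KK = cross_comm V2 V1"
  by (rule adj_unique[OF KK_adj])

lemma CC_sym: "defect_op V2 V1 = CC"
proof
  fix x show "defect_op V2 V1 x = CC x"
    unfolding defect_op_def by (simp add: Acomm comm algebra_simps)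
qed

lemma normal_norms:
  assumes "normal_op KK"
  shows "norm (KK x) = norm (cross_comm V2 V1 x)"
proof -
  have n: "KK (cross_comm V2 V1 z) = cross_comm V2 V1 (KK z)" for z
    using assms unfolding normal_op_def adj_KK by (metis comp_apply)
  have sym: "is_adj (cross_comm V2 V1) KK" by (rule is_adj_sym[OF KK_adj])
  have "cinner (KK x) (KK x) = cinner x (cross_comm V2 V1 (KK x))"
    using KK_adj unfolding is_adj_def by blast
  also have "\<dots> = cinner x (KK (cross_comm V2 V1 x))" by (simp only: n)
  also have "\<dots> = cinner (cross_comm V2 V1 x) (cross_comm V2 V1 x)"
    using sym unfolding is_adj_def by metis
  finally have "(norm (KK x))\<^sup>2 = (norm (cross_comm V2 V1 x))\<^sup>2" by (simp add: norm_sq_cinner)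
  then show ?thesis by (simp add: power2_eq_iff_nonneg)
qed

end

lemma scaleC_eq_0_vec: "a *\<^sub>C x = (0::'a::complex_inner) \<Longrightarrow> a \<noteq> 0 \<Longrightarrow> x = 0"
proof -
  assume h: "a *\<^sub>C x = 0" "a \<noteq> 0"
  have "x = (inverse a * a) *\<^sub>C x" using h(2) by (simp add: scaleC_one)
  also have "\<dots> = inverse a *\<^sub>C (a *\<^sub>C x)" by (simp only: scaleC_scaleC)
  also have "\<dots> = 0" using h(1) by simp
  finally show ?thesis .
qed

lemma cinner_mult_cnj_Re: "Re (z * cnj z) = (cmod z)\<^sup>2"
  by (simp add: complex_norm_square[symmetric])

context ipair
begin

lemma quad_form:
  assumes form: "\<And>x. CC x = (complex_of_real \<beta> * cinner x u) *\<^sub>C u"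
  shows "Re (cinner (CC y) y) = \<beta> * (cmod (cinner y u))\<^sup>2"
proof -
  have "cinner (CC y) y = complex_of_real \<beta> * (cinner y u * cnj (cinner y u))"
    by (simp add: form cinner_scaleC_left cinner_commute[of y u])
  also have "cinner y u * cnj (cinner y u) = complex_of_real ((cmod (cinner y u))\<^sup>2)"
    by (rule complex_norm_square[symmetric])
  finally have "cinner (CC y) y = complex_of_real (\<beta> * (cmod (cinner y u))\<^sup>2)" by simp
  then show ?thesis by simp
qed

lemma one_finite_structure:
  assumes nrm: "normal_op KK" and rk: "crank CC = 1"
  shows "(\<forall>x. A2 (V1 x) = V1 (A2 x)) \<and> (\<forall>x. A1 (V2 x) = V2 (A1 x)) \<and>
    (\<exists>e. norm e = 1 \<and> A1 e = 0 \<and> A2 e = 0 \<and> (\<forall>x. CC x = cinner x e *\<^sub>C e))"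
proof -
  interpret sw: ipair V2 V1 by unfold_locales (rule isometric_pair_sym[OF ip])
  obtain w where w: "w \<noteq> 0" "range CC = range (\<lambda>k. k *\<^sub>C w)"
    using rank1_range[OF CC_lin] rk unfolding crank_eq by blast
  obtain u \<beta> where ub: "norm u = 1" "\<beta> \<noteq> 0" "\<And>x. CC x = (complex_of_real \<beta> * cinner x u) *\<^sub>C u"
    using rank1_form[OF CC_sa CC_lin w] by blast
  have u0: "u \<noteq> 0" using ub(1) by auto
  have uu: "cinner u u = 1" using ub(1) by (simp add: cinner_self_real)
  have qf: "Re (cinner (CC y) y) = \<beta> * (cmod (cinner y u))\<^sup>2" for y by (rule quad_form[OF ub(3)])
  define a where "a = A1 u"
  define c where "c = A2 u"
  have Ka: "(norm (KK x))\<^sup>2 = - \<beta> * (cmod (cinner x a))\<^sup>2" for x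
    using CC_V1[of x] qf[of "V1 x"] unfolding a_def adj1 by simp
  have Kc: "(norm (cross_comm V2 V1 x))\<^sup>2 = - \<beta> * (cmod (cinner x c))\<^sup>2" for x
    using sw.CC_V1[of x] qf[of "V2 x"] unfolding c_def adj2 CC_sym by simp
  have ac: "cmod (cinner x a) = cmod (cinner x c)" for x
  proof -
    have "- \<beta> * (cmod (cinner x a))\<^sup>2 = - \<beta> * (cmod (cinner x c))\<^sup>2"
      using Ka[of x] Kc[of x] normal_norms[OF nrm, of x] by metis
    then have "(cmod (cinner x a))\<^sup>2 = (cmod (cinner x c))\<^sup>2" using ub(2) by simp
    then show ?thesis by (simp add: power2_eq_iff_nonneg)
  qed
  have Cu: "CC u = complex_of_real \<beta> *\<^sub>C u" using ub(3)[of u] uu by simp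
  have "A1 (A2 (complex_of_real \<beta> *\<^sub>C u)) = 0" using VCC[of u] Cu by simp
  then have "complex_of_real \<beta> *\<^sub>C A1 (A2 u) = 0" by (simp only: lins)
  then have AAu: "A1 (A2 u) = 0" using ub(2) scaleC_eq_0_vec by auto
  have A2a: "A2 a = 0" unfolding a_def using AAu Acomm by simp
  have A1c: "A1 c = 0" unfolding c_def using AAu by simp
  have A1a: "A1 a = 0"
  proof (rule cinner_eq_zero_all)
    fix y
    have "cmod (cinner (V1 y) a) = cmod (cinner (V1 y) c)" by (rule ac)
    also have "cinner (V1 y) c = 0" using A1c by (simp add: adj1)
    finally have "cinner (V1 y) a = 0" by simp
    then have "cinner y (A1 a) = 0" by (simp add: adj1)
    then show "cinner (A1 a) y = 0" using cinner_commute[of y "A1 a"] by simp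
  qed
  have Ca: "CC a = a" unfolding CC_def' using A1a A2a by simp
  have na: "(norm a)\<^sup>2 = \<beta> * (cmod (cinner a u))\<^sup>2"
    using qf[of a] Ca by (simp add: norm_sq_cinner)
  have K0: "KK x = 0" for x
  proof (cases "\<beta> > 0")
    case True
    have "(norm (KK x))\<^sup>2 \<le> 0" using Ka[of x] True by (simp add: mult_nonneg_nonneg)
    then show ?thesis by simp
  next
    case False
    then have "\<beta> < 0" using ub(2) by simp
    then have "(norm a)\<^sup>2 \<le> 0" using na by (simp add: mult_nonpos_nonneg)
    then have "a = 0" by simp
    then show ?thesis using Ka[of x] by simp
  qed
  have dc1: "A2 (V1 x) = V1 (A2 x)" for x using K0[of x] unfolding KK_def' by simp
  have dc2: "A1 (V2 x) = V2 (A1 x)" for x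
  proof -
    have "norm (cross_comm V2 V1 x) = 0" using normal_norms[OF nrm, of x] K0[of x] by simp
    then show ?thesis by (simp add: cross_comm_def)
  qed
  have L1: "A1 (CC x) = 0" for x
    unfolding CC_def' by (simp add: lins dc2)
  have L2: "A2 (CC x) = 0" for x
    unfolding CC_def' by (simp add: lins dc1 comm Acomm)
  have "complex_of_real \<beta> *\<^sub>C A1 u = 0" using L1[of u] Cu by (simp add: lins)
  then have A1u: "A1 u = 0" using ub(2) scaleC_eq_0_vec by auto
  have "complex_of_real \<beta> *\<^sub>C A2 u = 0" using L2[of u] Cu by (simp add: lins)
  then have A2u: "A2 u = 0" using ub(2) scaleC_eq_0_vec by auto
  have "CC u = u" unfolding CC_def' using A1u A2u by simp
  then have "(complex_of_real \<beta> - 1) *\<^sub>C u = 0" using Cu by (simp add: scaleC_diff_left scaleC_one)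
  then have "complex_of_real \<beta> - 1 = 0" using u0 scaleC_eq_0_vec by blast
  then have b1: "\<beta> = 1" by (simp add: complex_eq_iff)
  have "\<forall>x. CC x = cinner x u *\<^sub>C u" using ub(3) b1 by simp
  then show ?thesis using dc1 dc2 ub(1) A1u A2u by blast
qed

end

lemma cinner_sum_left: "cinner (sum g F) (y::'a::complex_inner) = (\<Sum>k\<in>F. cinner (g k) y)"
  by (induction F rule: infinite_finite_induct) (simp_all add: cinner_add_left)

lemma cinner_sum_right: "cinner (y::'a::complex_inner) (sum g F) = (\<Sum>k\<in>F. cinner y (g k))"
  by (induction F rule: infinite_finite_induct) (simp_all add: cinner_add_right)

lemma mult_cnj_sq: "z * cnj z = (complex_of_real (cmod z))\<^sup>2"
  by (metis complex_norm_square of_real_power)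

lemma cnj_mult_sq: "cnj z * z = (complex_of_real (cmod z))\<^sup>2"
  by (metis mult.commute mult_cnj_sq)

locale onfam =
  fixes f :: "'i \<Rightarrow> 'a::chilbert"
  assumes ortho: "\<And>i j. cinner (f i) (f j) = (if i = j then 1 else 0)"
begin

lemma cinner_comb_f: "finite F \<Longrightarrow> cinner (\<Sum>k\<in>F. d k *\<^sub>C f k) (f j) = (if j \<in> F then d j else 0)"
proof -
  assume F: "finite F"
  have "cinner (\<Sum>k\<in>F. d k *\<^sub>C f k) (f j) = (\<Sum>k\<in>F. d k * (if k = j then 1 else 0))"
    by (simp add: cinner_sum_left cinner_scaleC_left ortho)
  also have "\<dots> = (\<Sum>k\<in>F. if k = j then d k else 0)" by (rule sum.cong) auto
  also have "\<dots> = (if j \<in> F then d j else 0)" using F by (simp add: sum.delta)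
  finally show ?thesis .
qed

lemma pyth: "finite F \<Longrightarrow> (norm (\<Sum>k\<in>F. d k *\<^sub>C f k))\<^sup>2 = (\<Sum>k\<in>F. (cmod (d k))\<^sup>2)"
proof -
  assume F: "finite F"
  have "cinner (\<Sum>k\<in>F. d k *\<^sub>C f k) (\<Sum>k\<in>F. d k *\<^sub>C f k) = (\<Sum>j\<in>F. cnj (d j) * cinner (\<Sum>k\<in>F. d k *\<^sub>C f k) (f j))"
    by (simp add: cinner_sum_right cinner_scaleC_right)
  also have "\<dots> = (\<Sum>j\<in>F. cnj (d j) * d j)"
    by (rule sum.cong) (simp_all add: cinner_comb_f[OF F])
  also have "\<dots> = (\<Sum>j\<in>F. complex_of_real ((cmod (d j))\<^sup>2))"
    by (rule sum.cong) (simp_all add: cnj_mult_sq)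
  finally show ?thesis by (simp add: norm_sq_cinner)
qed

lemma bessel_finite:
  assumes F: "finite F"
  shows "(\<Sum>k\<in>F. (cmod (cinner x (f k)))\<^sup>2) \<le> (norm x)\<^sup>2"
proof -
  define s where "s = (\<Sum>k\<in>F. cinner x (f k) *\<^sub>C f k)"
  have xs: "cinner x s = complex_of_real (\<Sum>k\<in>F. (cmod (cinner x (f k)))\<^sup>2)"
    unfolding s_def by (simp add: cinner_sum_right cinner_scaleC_right mult_cnj_sq cnj_mult_sq)
  have sx: "cinner s x = complex_of_real (\<Sum>k\<in>F. (cmod (cinner x (f k)))\<^sup>2)"
    using xs cinner_commute[of s x] by simp
  have ss: "cinner s s = complex_of_real (\<Sum>k\<in>F. (cmod (cinner x (f k)))\<^sup>2)"
    using pyth[OF F, of "\<lambda>k. cinner x (f k)"] unfolding s_def[symmetric] by (simp add: cinner_self_real)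
  have "0 \<le> Re (cinner (x - s) (x - s))" by (rule cinner_self_nonneg)
  also have "cinner (x - s) (x - s) = cinner x x - cinner x s - cinner s x + cinner s s"
    by (simp add: cinner_diff_left cinner_diff_right)
  finally show ?thesis using xs sx ss by (simp add: norm_sq_cinner)
qed

lemma bessel_summable: "(\<lambda>k. (cmod (cinner x (f k)))\<^sup>2) summable_on UNIV"
  by (rule nonneg_bdd_above_summable_on) (auto intro!: bdd_aboveI[where M="(norm x)\<^sup>2"] bessel_finite)

lemma bessel: "(\<Sum>\<^sub>\<infinity>k. (cmod (cinner x (f k)))\<^sup>2) \<le> (norm x)\<^sup>2"
  by (rule infsum_le_finite_sums[OF bessel_summable]) (simp add: bessel_finite)

lemma comb_summable:
  assumes sq: "(\<lambda>k. (cmod (d k))\<^sup>2) summable_on UNIV"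
  shows "(\<lambda>k. d k *\<^sub>C f k) summable_on UNIV"
proof -
  define g where "g k = (cmod (d k))\<^sup>2" for k
  define G where "G = (\<Sum>\<^sub>\<infinity>k. g k)"
  have hg: "(g has_sum G) UNIV" using sq unfolding g_def G_def by (simp add: has_sum_infsum)
  have cauchy: "\<exists>P. eventually P (finite_subsets_at_top UNIV) \<and>
        (\<forall>F1 F2. P F1 \<and> P F2 \<longrightarrow> dist (\<Sum>k\<in>F1. d k *\<^sub>C f k) (\<Sum>k\<in>F2. d k *\<^sub>C f k) < e)"
    if e: "e > 0" for e
  proof -
    define \<delta> where "\<delta> = (e / 2)\<^sup>2 / 2"
    have \<delta>: "\<delta> > 0" using e by (simp add: \<delta>_def)
    have "eventually (\<lambda>F. dist (sum g F) G < \<delta>) (finite_subsets_at_top UNIV)"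
      using tendstoD[OF hg[unfolded has_sum_def] \<delta>] .
    then obtain F0 where F0a: "finite F0" and F0b: "\<forall>Y. finite Y \<and> F0 \<subseteq> Y \<and> Y \<subseteq> UNIV \<longrightarrow> dist (sum g Y) G < \<delta>"
      unfolding eventually_finite_subsets_at_top by (elim exE conjE) blast
    have F0: "finite F0" "\<And>F. finite F \<Longrightarrow> F0 \<subseteq> F \<Longrightarrow> dist (sum g F) G < \<delta>"
      using F0a F0b by auto
    define P where "P F \<longleftrightarrow> finite F \<and> F0 \<subseteq> F" for F
    have evP: "eventually P (finite_subsets_at_top UNIV)"
      unfolding eventually_finite_subsets_at_top P_def using F0(1) by blast
    have close: "norm ((\<Sum>k\<in>F. d k *\<^sub>C f k) - (\<Sum>k\<in>F0. d k *\<^sub>C f k)) < e / 2" if "P F" for F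
    proof -
      have F: "finite F" "F0 \<subseteq> F" using that by (auto simp: P_def)
      have "(\<Sum>k\<in>F. d k *\<^sub>C f k) - (\<Sum>k\<in>F0. d k *\<^sub>C f k) = (\<Sum>k\<in>F - F0. d k *\<^sub>C f k)"
        using F by (simp add: sum_diff)
      moreover have "(norm (\<Sum>k\<in>F - F0. d k *\<^sub>C f k))\<^sup>2 = sum g (F - F0)"
        unfolding g_def using F by (simp add: pyth)
      moreover have "sum g (F - F0) = sum g F - sum g F0" using F by (simp add: sum_diff)
      ultimately have eqn: "(norm ((\<Sum>k\<in>F. d k *\<^sub>C f k) - (\<Sum>k\<in>F0. d k *\<^sub>C f k)))\<^sup>2 = sum g F - sum g F0"
        by simp
      have "dist (sum g F) G < \<delta>" "dist (sum g F0) G < \<delta>" using F F0 by auto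
      then have "sum g F - G < \<delta>" "G - sum g F0 < \<delta>" by (simp_all add: dist_real_def abs_less_iff)
      then have "(norm ((\<Sum>k\<in>F. d k *\<^sub>C f k) - (\<Sum>k\<in>F0. d k *\<^sub>C f k)))\<^sup>2 < (e/2)\<^sup>2"
        unfolding eqn \<delta>_def by linarith
      then show ?thesis by (rule power2_less_imp_less) (use e in simp)
    qed
    have "dist (\<Sum>k\<in>F1. d k *\<^sub>C f k) (\<Sum>k\<in>F2. d k *\<^sub>C f k) < e" if "P F1" "P F2" for F1 F2
    proof -
      have "dist (\<Sum>k\<in>F1. d k *\<^sub>C f k) (\<Sum>k\<in>F2. d k *\<^sub>C f k)
          \<le> dist (\<Sum>k\<in>F1. d k *\<^sub>C f k) (\<Sum>k\<in>F0. d k *\<^sub>C f k) + dist (\<Sum>k\<in>F2. d k *\<^sub>C f k) (\<Sum>k\<in>F0. d k *\<^sub>C f k)"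
        by (rule dist_triangle2)
      also have "\<dots> < e / 2 + e / 2"
        using close[OF that(1)] close[OF that(2)] by (intro add_strict_mono) (simp_all add: dist_norm)
      finally show ?thesis by simp
    qed
    then show ?thesis using evP by blast
  qed
  then have "cauchy_filter (filtermap (\<lambda>F. \<Sum>k\<in>F. d k *\<^sub>C f k) (finite_subsets_at_top UNIV))"
    by (simp add: cauchy_filter_metric_filtermap)
  moreover have "complete (UNIV::'a set)"
    by (meson Cauchy_convergent UNIV_I complete_def convergent_def)
  ultimately obtain L where "((\<lambda>F. \<Sum>k\<in>F. d k *\<^sub>C f k) \<longlongrightarrow> L) (finite_subsets_at_top UNIV)"
    using complete_uniform[where S=UNIV] by (force simp add: filterlim_def)
  then show ?thesis unfolding summable_on_def has_sum_def by blast
qed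

lemma comb_coeff:
  assumes "((\<lambda>k. d k *\<^sub>C f k) has_sum s) UNIV"
  shows "cinner s (f j) = d j"
proof -
  have "((\<lambda>k. cinner (d k *\<^sub>C f k) (f j)) has_sum cinner s (f j)) UNIV"
    by (rule has_sum_bounded_linear[OF bounded_linear_cinner_left assms])
  moreover have "((\<lambda>k. cinner (d k *\<^sub>C f k) (f j)) has_sum d j) UNIV"
    by (rule has_sum_finite_neutralI[where B="{j}"]) (auto simp: cinner_scaleC_left ortho)
  ultimately show ?thesis using has_sum_unique by blast
qed

lemma comb_norm:
  assumes sq: "(\<lambda>k. (cmod (d k))\<^sup>2) summable_on UNIV"
    and hs: "((\<lambda>k. d k *\<^sub>C f k) has_sum s) UNIV"
  shows "(norm s)\<^sup>2 = (\<Sum>\<^sub>\<infinity>k. (cmod (d k))\<^sup>2)"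
proof -
  have "((\<lambda>F. (norm (\<Sum>k\<in>F. d k *\<^sub>C f k))\<^sup>2) \<longlongrightarrow> (norm s)\<^sup>2) (finite_subsets_at_top UNIV)"
    using hs unfolding has_sum_def by (intro tendsto_intros)
  moreover have "((\<lambda>F. (norm (\<Sum>k\<in>F. d k *\<^sub>C f k))\<^sup>2) \<longlongrightarrow> (\<Sum>\<^sub>\<infinity>k. (cmod (d k))\<^sup>2)) (finite_subsets_at_top UNIV)"
  proof -
    have "((\<lambda>F. \<Sum>k\<in>F. (cmod (d k))\<^sup>2) \<longlongrightarrow> (\<Sum>\<^sub>\<infinity>k. (cmod (d k))\<^sup>2)) (finite_subsets_at_top UNIV)"
      using sq unfolding summable_iff_has_sum_infsum has_sum_def .
    then show ?thesis
      by (rule Lim_transform_eventually)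
         (auto simp: eventually_finite_subsets_at_top pyth intro!: exI[of _ "{}"])
  qed
  ultimately show ?thesis using tendsto_unique finite_subsets_at_top_neq_bot by blast
qed

end

locale onbasis = onfam +
  assumes complete_f: "\<And>x. (\<And>k. cinner x (f k) = 0) \<Longrightarrow> x = 0"
begin

lemma expansion: "((\<lambda>k. cinner x (f k) *\<^sub>C f k) has_sum x) UNIV"
proof -
  obtain s where s: "((\<lambda>k. cinner x (f k) *\<^sub>C f k) has_sum s) UNIV"
    using comb_summable[OF bessel_summable] unfolding summable_on_def by blast
  have "x - s = 0"
  proof (rule complete_f)
    fix k show "cinner (x - s) (f k) = 0" using comb_coeff[OF s] by (simp add: cinner_diff_left)
  qed
  then show ?thesis using s by simp
qed

lemma parseval: "(norm x)\<^sup>2 = (\<Sum>\<^sub>\<infinity>k. (cmod (cinner x (f k)))\<^sup>2)"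
  by (rule comb_norm[OF bessel_summable expansion])

lemma coeff_inj: "(\<And>k. cinner x (f k) = cinner y (f k)) \<Longrightarrow> x = y"
  using complete_f[of "x - y"] by (simp add: cinner_diff_left)

end

locale dcpair = ipair +
  fixes e :: 'a
  assumes dc1: "\<And>x. A2 (V1 x) = V1 (A2 x)"
    and dc2: "\<And>x. A1 (V2 x) = V2 (A1 x)"
    and ne: "norm e = 1" and Ae1: "A1 e = 0" and Ae2: "A2 e = 0"
begin

definition fb :: "nat \<times> nat \<Rightarrow> 'a" where "fb k = (V1 ^^ fst k) ((V2 ^^ snd k) e)"

lemma V1pow0: "(V1 ^^ m) 0 = 0" by (induction m) auto
lemma V2pow0: "(V2 ^^ n) 0 = 0" by (induction n) auto

lemma comm_pow: "V2 ((V1 ^^ m) x) = (V1 ^^ m) (V2 x)"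
  by (induction m) (simp_all add: comm[symmetric])

lemma A1_V2pow: "A1 ((V2 ^^ n) x) = (V2 ^^ n) (A1 x)"
  by (induction n) (simp_all add: dc2)

lemma A2_V1pow: "A2 ((V1 ^^ m) x) = (V1 ^^ m) (A2 x)"
  by (induction m) (simp_all add: dc1)

lemma fb_V1: "V1 (fb (m, n)) = fb (Suc m, n)" by (simp add: fb_def)

lemma fb_V2: "V2 (fb (m, n)) = fb (m, Suc n)" by (simp add: fb_def comm_pow)

lemma fb_00: "fb (0, 0) = e" by (simp add: fb_def)

lemma A1_fb: "A1 (fb (m, n)) = (if m = 0 then 0 else fb (m - 1, n))"
  by (cases m) (simp_all add: fb_def A1_V2pow Ae1 V2pow0)

lemma A2_fb: "A2 (fb (m, n)) = (if n = 0 then 0 else fb (m, n - 1))"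
  by (cases n) (simp_all add: fb_def A2_V1pow Ae2 V1pow0)

lemma ee: "cinner e e = 1" using ne by (simp add: cinner_self_real)

lemma cinner_e_fb: "cinner e (fb (p, q)) = (if p = 0 \<and> q = 0 then 1 else 0)"
proof (cases p)
  case 0
  show ?thesis
  proof (cases q)
    case 0 then show ?thesis using \<open>p = 0\<close> by (simp add: fb_00 ee)
  next
    case (Suc q')
    have "cinner e (fb (p, q)) = cinner e (V2 (fb (0, q')))" using \<open>p = 0\<close> Suc by (simp add: fb_V2)
    also have "\<dots> = cinner (A2 e) (fb (0, q'))" by (simp only: adj2')
    finally show ?thesis using Suc by (simp add: Ae2)
  qed
next
  case (Suc p')
  have "cinner e (fb (p, q)) = cinner e (V1 (fb (p', q)))" using Suc by (simp add: fb_V1)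
  also have "\<dots> = cinner (A1 e) (fb (p', q))" by (simp only: adj1')
  finally show ?thesis using Suc by (simp add: Ae1)
qed

lemma fb_ortho: "cinner (fb (m, n)) (fb (p, q)) = (if (m, n) = (p, q) then 1 else 0)"
proof (induction m arbitrary: p)
  case 0
  show ?case
  proof (induction n arbitrary: q)
    case 0
    show ?case by (simp add: fb_00 cinner_e_fb)
  next
    case (Suc n)
    have "cinner (fb (0, Suc n)) (fb (p, q)) = cinner (fb (0, n)) (A2 (fb (p, q)))"
      by (simp only: fb_V2[symmetric] adj2)
    also have "\<dots> = (if q = 0 then 0 else cinner (fb (0, n)) (fb (p, q - 1)))"
      by (simp add: A2_fb)
    also have "\<dots> = (if (0, Suc n) = (p, q) then 1 else 0)"
      using Suc.IH[of "q - 1"] by auto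
    finally show ?case .
  qed
next
  case (Suc m)
  have "cinner (fb (Suc m, n)) (fb (p, q)) = cinner (fb (m, n)) (A1 (fb (p, q)))"
    by (simp only: fb_V1[symmetric] adj1)
  also have "\<dots> = (if p = 0 then 0 else cinner (fb (m, n)) (fb (p - 1, q)))"
    by (simp add: A1_fb)
  also have "\<dots> = (if (Suc m, n) = (p, q) then 1 else 0)"
    using Suc.IH[of "p - 1"] by auto
  finally show ?case .
qed

lemma fb_ortho': "cinner (fb i) (fb j) = (if i = j then 1 else 0)"
  using fb_ortho[of "fst i" "snd i" "fst j" "snd j"] by simp

sublocale onf: onfam fb
  by unfold_locales (rule fb_ortho')

lemma V1_coeff: "cinner (V1 x) (fb k) = shz (\<lambda>k. cinner x (fb k)) k"
proof -
  obtain m n where k: "k = (m, n)" by (cases k)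
  show ?thesis unfolding k adj1 by (cases m) (simp_all add: A1_fb shz_def)
qed

lemma V2_coeff: "cinner (V2 x) (fb k) = shw (\<lambda>k. cinner x (fb k)) k"
proof -
  obtain m n where k: "k = (m, n)" by (cases k)
  show ?thesis unfolding k adj2 by (cases n) (simp_all add: A2_fb shw_def)
qed

lemma A1_coeff: "cinner (A1 x) (fb (m, n)) = cinner x (fb (Suc m, n))"
  by (simp add: adj1' fb_V1)

lemma A2_coeff: "cinner (A2 x) (fb (m, n)) = cinner x (fb (m, Suc n))"
  by (simp add: adj2' fb_V2)

lemma complete_fb:
  assumes irr: "irreducible_pair V1 V2" and x: "\<And>k. cinner x (fb k) = 0"
  shows "x = 0"
proof -
  define N where "N = {x. \<forall>k. cinner x (fb k) = 0}"
  have cl: "closed N" unfolding N_def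
  proof (rule closed_Collect_all)
    fix k
    show "closed {x. cinner x (fb k) = 0}"
      using closed_Collect_eq[OF continuous_cinner_left[of "fb k"] continuous_on_const[of UNIV 0]] by simp
  qed
  have sub: "closed_csubspace N"
    unfolding closed_csubspace_def
  proof (intro conjI ballI allI cl)
    show "0 \<in> N" unfolding N_def by simp
    show "a + b \<in> N" if "a \<in> N" "b \<in> N" for a b using that unfolding N_def by (simp add: cinner_add_left)
    show "c *\<^sub>C a \<in> N" if "a \<in> N" for c a using that unfolding N_def by (simp add: cinner_scaleC_left)
  qed
  have i1: "V1 ` N \<subseteq> N" unfolding N_def by (auto simp: V1_coeff shz_def split: prod.splits)
  have i2: "V2 ` N \<subseteq> N" unfolding N_def by (auto simp: V2_coeff shw_def split: prod.splits)
  have c1: "cinner (A1 y) (fb k) = cinner y (fb (Suc (fst k), snd k))" for y k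
    using A1_coeff[of y "fst k" "snd k"] by simp
  have c2: "cinner (A2 y) (fb k) = cinner y (fb (fst k, Suc (snd k)))" for y k
    using A2_coeff[of y "fst k" "snd k"] by simp
  have i3: "A1 ` N \<subseteq> N" unfolding N_def by (auto simp: c1)
  have i4: "A2 ` N \<subseteq> N" unfolding N_def by (auto simp: c2)
  have "N = {0} \<or> N = UNIV" using irr sub i1 i2 i3 i4 unfolding irreducible_pair_def by blast
  moreover have "e \<notin> N"
  proof -
    have "cinner e (fb (0,0)) \<noteq> 0" using cinner_e_fb[of 0 0] by simp
    then show ?thesis unfolding N_def by blast
  qed
  ultimately have "N = {0}" by auto
  moreover have "x \<in> N" unfolding N_def using x by simp
  ultimately show ?thesis by simp
qed

end

locale dcirr = dcpair +
  assumes irr: "irreducible_pair V1 V2"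
begin

sublocale onb: onbasis fb
  by unfold_locales (rule complete_fb[OF irr])

definition Uh :: "'a \<Rightarrow> complex \<times> complex \<Rightarrow> complex" where
  "Uh x = H2_fun (\<lambda>k. cinner x (fb k))"

lemma coeff_sq: "sq_summable_coeffs (\<lambda>k. cinner x (fb k))"
  unfolding sq_summable_coeffs_def by (rule onf.bessel_summable)

lemma unitarily_equiv: "unitarily_equiv_Mz_Mw V1 V2"
  unfolding unitarily_equiv_Mz_Mw_def
proof (intro exI[of _ Uh] conjI allI)
  show "Uh (V1 x) = Mz (Uh x)" for x
    unfolding Uh_def V1_coeff by (rule H2_fun_shz)
  show "Uh (V2 x) = Mw (Uh x)" for x
    unfolding Uh_def V2_coeff by (rule H2_fun_shw)
  show "unitary_to_H2 Uh"
    unfolding unitary_to_H2_def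
  proof (intro conjI allI)
    show "Uh (x + y) = (\<lambda>p. Uh x p + Uh y p)" for x y
      unfolding Uh_def cinner_add_left by (rule H2_fun_add[OF coeff_sq coeff_sq])
    show "Uh (a *\<^sub>C x) = (\<lambda>p. a * Uh x p)" for a x
      unfolding Uh_def cinner_scaleC_left by (rule H2_fun_scale)
    show "H2_norm (Uh x) = norm x" for x
      unfolding Uh_def H2_norm_fun[OF coeff_sq] onb.parseval[of x, symmetric] by simp
    show "bij_betw Uh UNIV H2"
      unfolding bij_betw_def
    proof
      show "inj_on Uh UNIV"
      proof (rule inj_onI)
        fix x y assume "Uh x = Uh y"
        then have "(\<lambda>k. cinner x (fb k)) = (\<lambda>k. cinner y (fb k))"
          unfolding Uh_def by (rule H2_fun_inj[OF coeff_sq coeff_sq])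
        then show "x = y" by (intro onb.coeff_inj) (metis)
      qed
      show "range Uh = H2"
      proof
        show "range Uh \<subseteq> H2" unfolding Uh_def using H2_fun_mem[OF coeff_sq] by blast
        show "H2 \<subseteq> range Uh"
        proof
          fix f assume "f \<in> H2"
          then obtain c where c: "sq_summable_coeffs c" "f = H2_fun c" unfolding H2_def by blast
          obtain s where s: "((\<lambda>k. c k *\<^sub>C fb k) has_sum s) UNIV"
            using onf.comb_summable[of c] c(1) unfolding sq_summable_coeffs_def summable_on_def by blast
          have "(\<lambda>k. cinner s (fb k)) = c" using onf.comb_coeff[OF s] by auto
          then have "Uh s = f" unfolding Uh_def using c(2) by simp
          then show "f \<in> range Uh" by blast
        qed
      qed
    qed
  qed
qed

end

lemma zero_op_bl: "cbounded_linear (\<lambda>x::'a::chilbert. 0::'a)"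
  unfolding cbounded_linear_def clinear_def by (intro conjI exI[of _ 0]) auto

lemma zero_op_compact: "compact_op (\<lambda>x::'a::chilbert. 0::'a)"
proof -
  have "(\<lambda>x::'a. 0::'a) ` {x. norm x \<le> 1} = {0}" by (auto intro: image_eqI[of _ _ 0])
  then show ?thesis unfolding compact_op_def using zero_op_bl by simp
qed

lemma zero_op_normal: "normal_op (\<lambda>x::'a::chilbert. 0::'a)"
proof -
  have "adj (\<lambda>x::'a. 0::'a) = (\<lambda>x. 0)" by (rule adj_unique) (simp add: is_adj_def)
  then show ?thesis unfolding normal_op_def by simp
qed

context dcirr
begin

lemma cross_zero: "cross_comm V1 V2 = (\<lambda>x. 0)"
  by (rule ext) (simp add: cross_comm_def dc1)

lemma L1: "A1 (CC x) = 0"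
  unfolding CC_def' by (simp add: lins dc2)

lemma L2: "A2 (CC x) = 0"
  unfolding CC_def' by (simp add: lins dc1 comm Acomm)

lemma inL_form:
  assumes "A1 y = 0" "A2 y = 0"
  shows "y = cinner y e *\<^sub>C e"
proof (rule onb.coeff_inj)
  fix k :: "nat \<times> nat"
  obtain m n where k: "k = (m, n)" by (cases k)
  show "cinner y (fb k) = cinner (cinner y e *\<^sub>C e) (fb k)"
  proof (cases m)
    case 0
    show ?thesis
    proof (cases n)
      case 0 then show ?thesis using \<open>m = 0\<close> k by (simp add: fb_00 cinner_scaleC_left ee)
    next
      case (Suc n')
      have "cinner y (fb k) = cinner (A2 y) (fb (0, n'))"
        using k \<open>m = 0\<close> Suc by (simp add: fb_V2[symmetric] adj2')
      then show ?thesis using assms k \<open>m = 0\<close> Suc by (simp add: cinner_scaleC_left cinner_e_fb)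
    qed
  next
    case (Suc m')
    have "cinner y (fb k) = cinner (A1 y) (fb (m', n))"
      using k Suc by (simp add: fb_V1[symmetric] adj1')
    then show ?thesis using assms k Suc by (simp add: cinner_scaleC_left cinner_e_fb)
  qed
qed

lemma e0: "e \<noteq> 0" using ne by auto

lemma CC_form: "CC x = cinner x e *\<^sub>C e"
proof -
  have "CC x = cinner (CC x) e *\<^sub>C e" by (rule inL_form[OF L1 L2])
  also have "cinner (CC x) e = cinner x (CC e)" using CC_sa unfolding is_adj_def by blast
  also have "CC e = e" unfolding CC_def' by (simp add: Ae1 Ae2)
  finally show ?thesis .
qed

lemma range_CC: "range CC = range (\<lambda>k. k *\<^sub>C e)"
proof
  show "range CC \<subseteq> range (\<lambda>k. k *\<^sub>C e)" using CC_form by auto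
  show "range (\<lambda>k. k *\<^sub>C e) \<subseteq> range CC"
  proof
    fix y assume "y \<in> range (\<lambda>k. k *\<^sub>C e)"
    then obtain k where y: "y = k *\<^sub>C e" by blast
    have "CC y = y" unfolding CC_def' y by (simp add: lins Ae1 Ae2)
    then show "y \<in> range CC" by (metis rangeI)
  qed
qed

lemma crank_CC: "crank CC = 1"
  unfolding crank_eq range_CC by (rule dim_line[OF e0])

abbreviation "W \<equiv> (\<lambda>x. A2 (A1 x))"

lemma W_coeff: "cinner ((W ^^ m) x) (fb (p, q)) = cinner x (fb (p + m, q + m))"
proof (induction m arbitrary: p q)
  case 0 then show ?case by simp
next
  case (Suc m)
  have "cinner ((W ^^ Suc m) x) (fb (p, q)) = cinner (A1 ((W ^^ m) x)) (fb (p, Suc q))"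
    by (simp add: A2_coeff)
  also have "\<dots> = cinner ((W ^^ m) x) (fb (Suc p, Suc q))" by (simp add: A1_coeff)
  also have "\<dots> = cinner x (fb (p + Suc m, q + Suc m))" using Suc.IH by simp
  finally show ?case .
qed

lemma W_coeff': "cinner ((W ^^ m) x) (fb k) = cinner x (fb (fst k + m, snd k + m))"
  using W_coeff[of m x "fst k" "snd k"] by simp

lemma tail_small:
  fixes g :: "nat \<times> nat \<Rightarrow> real"
  assumes gs: "g summable_on UNIV" and g0: "\<And>k. 0 \<le> g k" and eps: "\<epsilon> > 0"
  shows "\<exists>M. \<forall>m\<ge>M. (\<Sum>\<^sub>\<infinity>k. g (fst k + m, snd k + m)) < \<epsilon>"
proof -
  define G where "G = infsum g UNIV"
  have hg: "(g has_sum G) UNIV" using gs by (simp add: G_def)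
  have "eventually (\<lambda>F. dist (sum g F) G < \<epsilon>) (finite_subsets_at_top UNIV)"
    using tendstoD[OF hg[unfolded has_sum_def] eps] .
  then obtain F0 where F0a: "finite F0" and F0b: "\<forall>Y. finite Y \<and> F0 \<subseteq> Y \<and> Y \<subseteq> UNIV \<longrightarrow> dist (sum g Y) G < \<epsilon>"
    unfolding eventually_finite_subsets_at_top by (elim exE conjE) blast
  have dF0: "G - sum g F0 < \<epsilon>" using F0a F0b by (auto simp: dist_real_def)
  define M where "M = Suc (Max (fst ` F0 \<union> snd ` F0))"
  have Mbig: "fst k < M" "snd k < M" if "k \<in> F0" for k
    using that F0a unfolding M_def by (auto simp: le_imp_less_Suc)
  have "(\<Sum>\<^sub>\<infinity>k. g (fst k + m, snd k + m)) < \<epsilon>" if m: "m \<ge> M" for m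
  proof -
    define h where "h = (\<lambda>k::nat\<times>nat. (fst k + m, snd k + m))"
    have inj: "inj h" unfolding h_def inj_def by auto
    have disj: "range h \<subseteq> UNIV - F0"
    proof
      fix y assume "y \<in> range h"
      then obtain k where "y = h k" by blast
      then have fy: "fst y \<ge> M" using m unfolding h_def by simp
      show "y \<in> UNIV - F0" using Mbig(1)[of y] fy by auto
    qed
    have s1: "g summable_on (UNIV - F0)" by (rule summable_on_subset_banach[OF gs]) simp
    have s2: "g summable_on range h" by (rule summable_on_subset_banach[OF gs]) simp
    have "(\<Sum>\<^sub>\<infinity>k. g (fst k + m, snd k + m)) = infsum (g \<circ> h) UNIV" by (simp add: h_def comp_def)
    also have "\<dots> = infsum g (range h)" by (rule infsum_reindex[OF inj, symmetric])
    also have "\<dots> \<le> infsum g (UNIV - F0)"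
      by (rule infsum_mono_neutral[OF s2 s1]) (use disj g0 in auto)
    also have "infsum g (UNIV - F0) = G - sum g F0"
    proof -
      have "infsum g (F0 \<union> (UNIV - F0)) = infsum g F0 + infsum g (UNIV - F0)"
        by (rule infsum_Un_disjoint) (use F0a s1 in auto)
      then show ?thesis using F0a by (simp add: G_def)
    qed
    finally show ?thesis using dF0 by linarith
  qed
  then show ?thesis by blast
qed

lemma shift_V: "is_shift (V1 \<circ> V2)"
  unfolding is_shift_def
proof
  show iso: "isometry (V1 \<circ> V2)"
    unfolding isometry_def cbounded_linear_def clinear_def
    by (auto simp: lins intro!: exI[of _ 1])
  have adjV: "adj (V1 \<circ> V2) = A2 \<circ> A1"
    by (rule adj_unique, rule is_adj_comp) (use adj_is_adj[OF bl1] adj_is_adj[OF bl2] in auto)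
  show "\<forall>x. (\<lambda>m. (adj (V1 \<circ> V2) ^^ m) x) \<longlonglongrightarrow> 0"
  proof
    fix x
    have fW: "(A2 \<circ> A1) = W" by (simp add: comp_def)
    define g where "g k = (cmod (cinner x (fb k)))\<^sup>2" for k
    have gs: "g summable_on UNIV" unfolding g_def by (rule onf.bessel_summable)
    have nW: "(norm ((W ^^ m) x))\<^sup>2 = (\<Sum>\<^sub>\<infinity>k. g (fst k + m, snd k + m))" for m
      unfolding onb.parseval g_def W_coeff' ..
    show "(\<lambda>m. (adj (V1 \<circ> V2) ^^ m) x) \<longlonglongrightarrow> 0"
      unfolding adjV fW
    proof (rule LIMSEQ_I)
      fix r :: real assume r: "0 < r"
      obtain M where M: "\<And>m. m \<ge> M \<Longrightarrow> (\<Sum>\<^sub>\<infinity>k. g (fst k + m, snd k + m)) < r\<^sup>2"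
        using tail_small[OF gs _, of "r\<^sup>2"] r unfolding g_def by auto
      have "norm ((W ^^ m) x - 0) < r" if "m \<ge> M" for m
      proof -
        have "(norm ((W ^^ m) x))\<^sup>2 < r\<^sup>2" using M[OF that] nW[of m] by simp
        then show ?thesis using r by (simp add: power2_less_imp_less)
      qed
      then show "\<exists>no. \<forall>n\<ge>no. norm ((W ^^ n) x - 0) < r" by blast
    qed
  qed
qed

lemma one_finite: "one_finite_pair V1 V2"
  unfolding one_finite_pair_def compact_normal_pair_def BCL_pair_def
  using ip shift_V crank_CC cross_zero zero_op_compact zero_op_normal by simp

end

definition dlt :: "nat \<times> nat \<Rightarrow> nat \<times> nat \<Rightarrow> complex" where
  "dlt j = (\<lambda>k. if k = j then 1 else 0)"

lemma dlt_sq_has: "((\<lambda>k. (cmod (dlt j k))\<^sup>2) has_sum 1) UNIV"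
  by (rule has_sum_finite_neutralI[where B="{j}"]) (auto simp: dlt_def)

lemma dlt_sq: "sq_summable_coeffs (dlt j)"
  unfolding sq_summable_coeffs_def using dlt_sq_has summable_on_def by blast

lemma shz_dlt: "shz (dlt (m, n)) = dlt (Suc m, n)"
  by (rule ext) (auto simp: shz_def dlt_def split: prod.splits)

lemma shw_dlt: "shw (dlt (m, n)) = dlt (m, Suc n)"
  by (rule ext) (auto simp: shw_def dlt_def split: prod.splits)

lemma infsum_change_one:
  fixes f :: "'i \<Rightarrow> real"
  assumes "f summable_on UNIV"
  shows "infsum (\<lambda>k. if k = j then v else f k) UNIV = infsum f UNIV - f j + v"
proof -
  have h1: "(f has_sum infsum f UNIV) UNIV" using assms by simp
  have h2: "((\<lambda>k. if k = j then v - f j else 0) has_sum (v - f j)) UNIV"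
    by (rule has_sum_finite_neutralI[where B="{j}"]) auto
  have "((\<lambda>k. f k + (if k = j then v - f j else 0)) has_sum (infsum f UNIV + (v - f j))) UNIV"
    by (rule has_sum_add[OF h1 h2])
  moreover have "(\<lambda>k. f k + (if k = j then v - f j else 0)) = (\<lambda>k. if k = j then v else f k)"
    by auto
  ultimately show ?thesis by (simp add: infsumI)
qed

lemma cmod_plus1_sq: "(cmod (a + 1))\<^sup>2 = (cmod a)\<^sup>2 + 2 * Re a + 1"
  unfolding cmod_power2 by (simp add: power2_eq_square algebra_simps)

locale ueq = ipair +
  fixes U :: "'a \<Rightarrow> complex \<times> complex \<Rightarrow> complex"
  assumes uni: "unitary_to_H2 U"
    and i1: "\<And>x. U (V1 x) = Mz (U x)" and i2: "\<And>x. U (V2 x) = Mw (U x)"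
begin

definition cf :: "'a \<Rightarrow> nat \<times> nat \<Rightarrow> complex" where "cf x = H2_coeff (U x)"

lemma bij: "bij_betw U UNIV H2" using uni unfolding unitary_to_H2_def by blast
lemma Uadd: "U (x + y) = (\<lambda>p. U x p + U y p)" using uni unfolding unitary_to_H2_def by blast
lemma Uscale: "U (a *\<^sub>C x) = (\<lambda>p. a * U x p)" using uni unfolding unitary_to_H2_def by blast
lemma Unorm: "H2_norm (U x) = norm x" using uni unfolding unitary_to_H2_def by blast

lemma Umem: "U x \<in> H2" using bij by (auto simp: bij_betw_def)

lemma cf_sq: "sq_summable_coeffs (cf x)" and U_cf: "H2_fun (cf x) = U x"
  using H2_memD[OF Umem] unfolding cf_def by auto

lemma cf_add: "cf (x + y) = (\<lambda>k. cf x k + cf y k)"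
proof -
  have "U (x + y) = H2_fun (\<lambda>k. cf x k + cf y k)"
    unfolding Uadd H2_fun_add[OF cf_sq cf_sq] U_cf ..
  then show ?thesis unfolding cf_def using H2_coeff_fun[OF sq_summable_add[OF cf_sq cf_sq]]
    by (simp add: cf_def)
qed

lemma cf_scale: "cf (a *\<^sub>C x) = (\<lambda>k. a * cf x k)"
proof -
  have "U (a *\<^sub>C x) = H2_fun (\<lambda>k. a * cf x k)"
    unfolding Uscale H2_fun_scale U_cf ..
  then show ?thesis unfolding cf_def using H2_coeff_fun[OF sq_summable_scale[OF cf_sq]]
    by (simp add: cf_def)
qed

lemma cf_zero: "cf 0 = (\<lambda>k. 0)"
  using cf_scale[of 0 0] by simp

lemma cf_V1: "cf (V1 x) = shz (cf x)"
proof -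
  have "U (V1 x) = H2_fun (shz (cf x))" unfolding i1 H2_fun_shz U_cf ..
  then show ?thesis unfolding cf_def using H2_coeff_fun[OF sq_summable_shz[OF cf_sq]] by (simp add: cf_def)
qed

lemma cf_V2: "cf (V2 x) = shw (cf x)"
proof -
  have "U (V2 x) = H2_fun (shw (cf x))" unfolding i2 H2_fun_shw U_cf ..
  then show ?thesis unfolding cf_def using H2_coeff_fun[OF sq_summable_shw[OF cf_sq]] by (simp add: cf_def)
qed

lemma cf_inj: "cf x = cf y \<Longrightarrow> x = y"
proof -
  assume "cf x = cf y"
  then have "U x = U y" using U_cf[of x] U_cf[of y] by simp
  then show ?thesis using bij unfolding bij_betw_def inj_on_def by blast
qed

lemma cf_norm: "(norm x)\<^sup>2 = (\<Sum>\<^sub>\<infinity>k. (cmod (cf x k))\<^sup>2)"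
proof -
  have "norm x = sqrt (\<Sum>\<^sub>\<infinity>k. (cmod (cf x k))\<^sup>2)"
    using Unorm[of x] unfolding H2_norm_def cf_def by simp
  moreover have "0 \<le> (\<Sum>\<^sub>\<infinity>k. (cmod (cf x k))\<^sup>2)" by (rule infsum_nonneg) simp
  ultimately show ?thesis by simp
qed

lemma cf_surj: "sq_summable_coeffs c \<Longrightarrow> \<exists>x. cf x = c"
proof -
  assume c: "sq_summable_coeffs c"
  have "H2_fun c \<in> H2" by (rule H2_fun_mem[OF c])
  then have "H2_fun c \<in> range U" using bij unfolding bij_betw_def by simp
  then obtain x where "U x = H2_fun c" by (rule rangeE) simp
  then have "cf x = c" unfolding cf_def using H2_coeff_fun[OF c] by simp
  then show ?thesis by blast
qed

lemma Re_inner_dlt: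
  assumes y: "cf y = dlt j"
  shows "Re (cinner x y) = Re (cf x j)"
proof -
  define a where "a = cf x j"
  have sx: "(\<lambda>k. (cmod (cf x k))\<^sup>2) summable_on UNIV" using cf_sq[of x] unfolding sq_summable_coeffs_def .
  have "(\<lambda>k. (cmod (cf (x + y) k))\<^sup>2) = (\<lambda>k. if k = j then (cmod (a + 1))\<^sup>2 else (cmod (cf x k))\<^sup>2)"
    by (rule ext) (simp add: cf_add y dlt_def a_def)
  then have "(norm (x + y))\<^sup>2 = (\<Sum>\<^sub>\<infinity>k. (cmod (cf x k))\<^sup>2) - (cmod a)\<^sup>2 + (cmod (a + 1))\<^sup>2"
    unfolding cf_norm[of "x + y"] using infsum_change_one[OF sx] a_def by simp
  also have "\<dots> = (norm x)\<^sup>2 + 2 * Re a + 1" unfolding cf_norm[of x] cmod_plus1_sq by simp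
  finally have e1: "(norm (x + y))\<^sup>2 = (norm x)\<^sup>2 + 2 * Re a + 1" .
  have ny: "(norm y)\<^sup>2 = 1" unfolding cf_norm y using infsumI[OF dlt_sq_has] by simp
  show ?thesis using e1 norm_add_sq[of x y] ny unfolding a_def by simp
qed

lemma inner_dlt:
  assumes y: "cf y = dlt j"
  shows "cinner x y = cf x j"
proof -
  have re: "Re (cinner x y) = Re (cf x j)" by (rule Re_inner_dlt[OF y])
  have "Re (cinner (\<i> *\<^sub>C x) y) = Re (cf (\<i> *\<^sub>C x) j)" by (rule Re_inner_dlt[OF y])
  then have im: "Im (cinner x y) = Im (cf x j)" by (simp add: cinner_scaleC_left cf_scale)
  show ?thesis using re im by (simp add: complex_eq_iff)
qed

definition e0 :: 'a where "e0 = (SOME x. cf x = dlt (0, 0))"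

lemma cf_e0: "cf e0 = dlt (0, 0)"
  unfolding e0_def using cf_surj[OF dlt_sq] by (rule someI_ex)

definition gb :: "nat \<times> nat \<Rightarrow> 'a" where "gb k = (V1 ^^ fst k) ((V2 ^^ snd k) e0)"

lemma comm_pow': "V2 ((V1 ^^ m) x) = (V1 ^^ m) (V2 x)"
  by (induction m) (simp_all add: comm[symmetric])

lemma cf_V1pow: "cf ((V1 ^^ m) y) = (shz ^^ m) (cf y)"
  by (induction m) (simp_all add: cf_V1)

lemma cf_V2pow: "cf ((V2 ^^ n) y) = (shw ^^ n) (cf y)"
  by (induction n) (simp_all add: cf_V2)

lemma shw_pow_dlt: "(shw ^^ n) (dlt (m, 0)) = dlt (m, n)"
  by (induction n) (simp_all add: shw_dlt)

lemma shz_pow_dlt: "(shz ^^ m) (dlt (0, n)) = dlt (m, n)"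
  by (induction m) (simp_all add: shz_dlt)

lemma cf_gb: "cf (gb (m, n)) = dlt (m, n)"
  unfolding gb_def by (simp add: cf_V1pow cf_V2pow cf_e0 shw_pow_dlt shz_pow_dlt)

lemma inner_gb: "cinner x (gb (m, n)) = cf x (m, n)"
  by (rule inner_dlt[OF cf_gb])

lemma gb_V1: "V1 (gb (m, n)) = gb (Suc m, n)" by (simp add: gb_def)
lemma gb_V2: "V2 (gb (m, n)) = gb (m, Suc n)" by (simp add: gb_def comm_pow')

lemma cf_A1: "cf (A1 y) (m, n) = cf y (Suc m, n)"
proof -
  have "cf (A1 y) (m, n) = cinner (A1 y) (gb (m, n))" by (simp add: inner_gb)
  also have "\<dots> = cinner y (gb (Suc m, n))" by (simp add: adj1' gb_V1)
  also have "\<dots> = cf y (Suc m, n)" by (simp add: inner_gb)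
  finally show ?thesis .
qed

lemma cf_A2: "cf (A2 y) (m, n) = cf y (m, Suc n)"
proof -
  have "cf (A2 y) (m, n) = cinner (A2 y) (gb (m, n))" by (simp add: inner_gb)
  also have "\<dots> = cinner y (gb (m, Suc n))" by (simp add: adj2' gb_V2)
  also have "\<dots> = cf y (m, Suc n)" by (simp add: inner_gb)
  finally show ?thesis .
qed

lemma dc1': "A2 (V1 x) = V1 (A2 x)"
proof (rule cf_inj, rule ext)
  fix k :: "nat \<times> nat"
  obtain m n where k: "k = (m, n)" by (cases k)
  show "cf (A2 (V1 x)) k = cf (V1 (A2 x)) k"
    unfolding k cf_A2 cf_V1 by (cases m) (simp_all add: shz_def cf_A2)
qed

lemma dc2': "A1 (V2 x) = V2 (A1 x)"
proof (rule cf_inj, rule ext)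
  fix k :: "nat \<times> nat"
  obtain m n where k: "k = (m, n)" by (cases k)
  show "cf (A1 (V2 x)) k = cf (V2 (A1 x)) k"
    unfolding k cf_A1 cf_V2 by (cases n) (simp_all add: shw_def cf_A1)
qed

lemma Ae1': "A1 e0 = 0"
proof (rule cf_inj, rule ext)
  fix k :: "nat \<times> nat"
  obtain m n where k: "k = (m, n)" by (cases k)
  show "cf (A1 e0) k = cf 0 k" unfolding k cf_A1 cf_zero cf_e0 by (simp add: dlt_def)
qed

lemma Ae2': "A2 e0 = 0"
proof (rule cf_inj, rule ext)
  fix k :: "nat \<times> nat"
  obtain m n where k: "k = (m, n)" by (cases k)
  show "cf (A2 e0) k = cf 0 k" unfolding k cf_A2 cf_zero cf_e0 by (simp add: dlt_def)
qed

lemma ne0: "norm e0 = 1"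
proof -
  have "(norm e0)\<^sup>2 = 1" unfolding cf_norm cf_e0 using infsumI[OF dlt_sq_has] by simp
  then show ?thesis using norm_ge_zero[of e0] by (auto simp: power2_eq_1_iff)
qed

lemma dcpair_e0: "dcpair V1 V2 e0"
  by unfold_locales (simp_all add: dc1' dc2' ne0 Ae1' Ae2')

end

theorem main_equiv:
  fixes V1 V2 :: "'a::chilbert \<Rightarrow> 'a"
  assumes ip: "isometric_pair V1 V2"
    and irr: "irreducible_pair V1 V2"
  shows "one_finite_pair V1 V2 \<longleftrightarrow> unitarily_equiv_Mz_Mw V1 V2"
proof
  interpret ipair V1 V2 by unfold_locales (rule ip)
  assume ofp: "one_finite_pair V1 V2"
  have nrm: "normal_op (cross_comm V1 V2)" and rk: "crank (defect_op V1 V2) = 1"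
    using ofp unfolding one_finite_pair_def compact_normal_pair_def by auto
  obtain e where dc1: "\<And>x. A2 (V1 x) = V1 (A2 x)" and dc2: "\<And>x. A1 (V2 x) = V2 (A1 x)"
    and e: "norm e = 1" "A1 e = 0" "A2 e = 0"
    using one_finite_structure[OF nrm rk] by blast
  interpret dcirr V1 V2 e
    by unfold_locales (simp_all add: dc1 dc2 e irr)
  show "unitarily_equiv_Mz_Mw V1 V2" by (rule unitarily_equiv)
next
  interpret ipair V1 V2 by unfold_locales (rule ip)
  assume "unitarily_equiv_Mz_Mw V1 V2"
  then obtain U where U: "unitary_to_H2 U" "\<And>x. U (V1 x) = Mz (U x)" "\<And>x. U (V2 x) = Mw (U x)"
    unfolding unitarily_equiv_Mz_Mw_def by blast
  interpret ueq V1 V2 U by unfold_locales (simp_all add: U)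
  interpret dcpair V1 V2 e0 by (rule dcpair_e0)
  interpret dcirr V1 V2 e0 by unfold_locales (rule irr)
  show "one_finite_pair V1 V2" by (rule one_finite)
qed

theorem theorem7p1:
  fixes V1 V2 :: "'a::chilbert \<Rightarrow> 'a"
  assumes "separable_space TYPE('a)"
    and "isometric_pair V1 V2"
    and "irreducible_pair V1 V2"
  shows "one_finite_pair V1 V2 \<longleftrightarrow> unitarily_equiv_Mz_Mw V1 V2"
  by (rule main_equiv[OF assms(2) assms(3)])

end
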